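(* In the bootstrap setting, let $|\alpha|+|\beta|+|\sigma|\le10$ and $i,j\in\{1,2,3\}$. Then for all $T\in[0,T_{\mathrm{boot}})$, $\mathcal A^{\alpha,\beta,\sigma}_6\lesssim\epsilon^2(1+T)^{2|\beta|(1+\delta)}$, where $$\mathcal A^{\alpha,\beta,\sigma}_6:=\big\|(1+t)^2\langle v\rangle^{2\nu_{\alpha,\beta,\sigma}}\langle x-(t+1)v\rangle^{2\omega_{\alpha,\beta,\sigma}-2}\bar a_{ij}(D^{\alpha,\beta,\sigma}g)^2\big\|_{L^1([0,T];L^1_xL^1_v)}.$$
   Context: Notation: $\langle z\rangle=\sqrt{1+|z|^2}$; repeated lower-case indices summed over $\{1,2,3\}$ unless fixed. Multi-indices $\alpha,\beta,\sigma\in(\mathbb N\cup\{0\})^3$ with $|\alpha|=\sum\alpha_l$. $D^{\alpha,\beta,\sigma}=\partial_x^\alpha\partial_v^\beta Y^\sigma$ with $Y^\sigma=\prod_lY_l^{\sigma_l}$, $Y_l=(t+1)\partial_{x_l}+\partial_{v_l}$. $\nu_{\alpha,\beta,\sigma}=20-\frac32(|\alpha|+|\sigma|)-\frac12|\beta|$, $\omega_{\alpha,\beta,\sigma}=20-\frac32|\sigma|-\frac12(|\alpha|+|\beta|)$, $W_{\alpha,\beta,\sigma}=\langle v\rangle^{\nu_{\alpha,\beta,\sigma}}\langle x-(t+1)v\rangle^{\omega_{\alpha,\beta,\sigma}}$. Mixed norms take $v$ first, then $x$, then $t$. Bootstrap setting: fix $\gamma\in[0,1)$, $d_0>0$, $\delta\in(0,\frac18)$;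 $a_{ij}(z)=(\delta_{ij}-z_iz_j/|z|^2)|z|^{\gamma+2}$, $c=\partial^2_{z_iz_j}a_{ij}$, $\bar a_{ij}=\int a_{ij}(v-v_* )f(t,x,v_* )dv_*$, $\bar c=\int c(v-v_* )f(t,x,v_* )dv_*$; Landau equation $\partial_tf+v_i\partial_{x_i}f=\bar a_{ij}\partial^2_{v_iv_j}f-\bar cf$; $d(t)=d_0(1+(1+t)^{-\delta})$. Energy norm for $T>0$: $\|h\|^2_{E_T}=\sum_{|\alpha|+|\beta|+|\sigma|\le10}(1+T)^{-|\beta|(1+\delta)}\big(\|W_{\alpha,\beta,\sigma}D^{\alpha,\beta,\sigma}h\|^2_{L^\infty([0,T);L^2_xL^2_v)}+\|\langle v\rangle^{1/2}W_{\alpha,\beta,\sigma}D^{\alpha,\beta,\sigma}h\|^2_{L^2([0,T);L^2_xL^2_v)}\big)$. $\epsilon_0=\epsilon_0(d_0,\gamma)>0$ is a fixed sufficiently small constant, $\epsilon\in[0,\epsilon_0]$, and $f_{\mathrm{ini}}$ satisfies $\sum_{|\alpha|+|\beta|+|\sigma|\le10}\|\langle v\rangle^{20-\frac32|\alpha|-\frac12|\beta|-\frac32|\sigma|}\langle x-v\rangle^{20-\frac32|\sigma|-\frac12|\beta|-\frac12|\alpha|}\partial_x^\alpha\partial_v^\beta(\partial_x+\partial_v)^\sigma(e^{2d_0\langle v\rangle}f_{\mathrm{ini}})\|^2_{L^2_xL^2_v}<\epsilon$. $T_{\mathrm{boot}}>0$ and $f:[0,T_{\mathrm{boot}})\times\mathbb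 R^3\times\mathbb R^3\to\mathbb R$ is a (sufficiently regular) solution of the Landau equation with $f\ge0$, $f(0)=f_{\mathrm{ini}}$; $g=e^{d(t)\langle v\rangle}f$; and $\|g\|_{E_T}\le\epsilon^{3/4}$ for all $T\in[0,T_{\mathrm{boot}})$. $A\lesssim B$ means $A\le CB$ with $C$ depending only on $d_0,\gamma$. *)

theory Defs
  imports "HOL-Analysis.Analysis" "HOL-Probability.Essential_Supremum"
begin

text \<open>Setting of the Landau equation bootstrap: positions x and velocities v
  live in real^3; index type 3 stands for the coordinate indices {1,2,3}.\<close>

type_synonym phase_fun = "real^3 \<Rightarrow> real^3 \<Rightarrow> real"
type_synonym mindex = "3 \<Rightarrow> nat"

definition japan :: "real^3 \<Rightarrow> real" where
  "japan z = sqrt (1 + (norm z)^2)"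

definition mlen :: "mindex \<Rightarrow> nat" where
  "mlen a = (\<Sum>l\<in>UNIV. a l)"

definition pd :: "3 \<Rightarrow> (real^3 \<Rightarrow> real) \<Rightarrow> real^3 \<Rightarrow> real" where
  "pd l \<phi> z = deriv (\<lambda>s. \<phi> (z + s *\<^sub>R axis l 1)) 0"

definition dx :: "3 \<Rightarrow> phase_fun \<Rightarrow> phase_fun" where
  "dx l h = (\<lambda>x v. deriv (\<lambda>s. h (x + s *\<^sub>R axis l 1) v) 0)"

definition dv :: "3 \<Rightarrow> phase_fun \<Rightarrow> phase_fun" where
  "dv l h = (\<lambda>x v. deriv (\<lambda>s. h x (v + s *\<^sub>R axis l 1)) 0)"

definition Yop :: "real \<Rightarrow> 3 \<Rightarrow> phase_fun \<Rightarrow> phase_fun" where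
  "Yop t l h = (\<lambda>x v. (t + 1) * dx l h x v + dv l h x v)"

definition Dop :: "real \<Rightarrow> mindex \<Rightarrow> mindex \<Rightarrow> mindex \<Rightarrow> phase_fun \<Rightarrow> phase_fun" where
  "Dop t \<alpha> \<beta> \<sigma> h =
     ((dx 1 ^^ \<alpha> 1) \<circ> (dx 2 ^^ \<alpha> 2) \<circ> (dx 3 ^^ \<alpha> 3) \<circ>
      (dv 1 ^^ \<beta> 1) \<circ> (dv 2 ^^ \<beta> 2) \<circ> (dv 3 ^^ \<beta> 3) \<circ>
      (Yop t 1 ^^ \<sigma> 1) \<circ> (Yop t 2 ^^ \<sigma> 2) \<circ> (Yop t 3 ^^ \<sigma> 3)) h"

definition nu :: "mindex \<Rightarrow> mindex \<Rightarrow> mindex \<Rightarrow> real" where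
  "nu \<alpha> \<beta> \<sigma> = 20 - 3/2 * (mlen \<alpha> + mlen \<sigma>) - 1/2 * mlen \<beta>"

definition omega :: "mindex \<Rightarrow> mindex \<Rightarrow> mindex \<Rightarrow> real" where
  "omega \<alpha> \<beta> \<sigma> = 20 - 3/2 * mlen \<sigma> - 1/2 * (mlen \<alpha> + mlen \<beta>)"

definition Wt :: "real \<Rightarrow> mindex \<Rightarrow> mindex \<Rightarrow> mindex \<Rightarrow> phase_fun" where
  "Wt t \<alpha> \<beta> \<sigma> = (\<lambda>x v. japan v powr nu \<alpha> \<beta> \<sigma> * japan (x - (t + 1) *\<^sub>R v) powr omega \<alpha> \<beta> \<sigma>)"

definition MI :: "(mindex \<times> mindex \<times> mindex) set" where
  "MI = {(\<alpha>, \<beta>, \<sigma>). mlen \<alpha> + mlen \<beta> + mlen \<sigma> \<le> 10}"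

definition L2sq :: "phase_fun \<Rightarrow> ennreal" where
  "L2sq h = (\<integral>\<^sup>+ x. (\<integral>\<^sup>+ v. ennreal ((h x v)^2) \<partial>lborel) \<partial>lborel)"

definition ET_sq :: "real \<Rightarrow> real \<Rightarrow> (real \<Rightarrow> phase_fun) \<Rightarrow> ennreal" where
  "ET_sq \<delta> T h = (\<Sum>(\<alpha>, \<beta>, \<sigma>)\<in>MI.
      ennreal ((1 + T) powr (- real (mlen \<beta>) * (1 + \<delta>))) *
      (esssup (restrict_space lborel {0..<T})
          (\<lambda>t. L2sq (\<lambda>x v. Wt t \<alpha> \<beta> \<sigma> x v * Dop t \<alpha> \<beta> \<sigma> (h t) x v))
       + (\<integral>\<^sup>+ t\<in>{0..<T}.
          L2sq (\<lambda>x v. japan v powr (1/2) * Wt t \<alpha> \<beta> \<sigma> x v * Dop t \<alpha> \<beta> \<sigma> (h t) x v) \<partial>lborel)))"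

definition akern :: "real \<Rightarrow> 3 \<Rightarrow> 3 \<Rightarrow> real^3 \<Rightarrow> real" where
  "akern \<gamma> i j z = ((if i = j then 1 else 0) - z$i * z$j / (norm z)^2) * norm z powr (\<gamma> + 2)"

definition ckern :: "real \<Rightarrow> real^3 \<Rightarrow> real" where
  "ckern \<gamma> z = (\<Sum>i\<in>UNIV. \<Sum>j\<in>UNIV. pd i (pd j (akern \<gamma> i j)) z)"

definition abar :: "real \<Rightarrow> (real \<Rightarrow> phase_fun) \<Rightarrow> 3 \<Rightarrow> 3 \<Rightarrow> real \<Rightarrow> phase_fun" where
  "abar \<gamma> f i j t = (\<lambda>x v. \<integral>w. akern \<gamma> i j (v - w) * f t x w \<partial>lborel)"

definition cbar :: "real \<Rightarrow> (real \<Rightarrow> phase_fun) \<Rightarrow> real \<Rightarrow> phase_fun" where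
  "cbar \<gamma> f t = (\<lambda>x v. \<integral>w. ckern \<gamma> (v - w) * f t x w \<partial>lborel)"

text \<open>Iterated (x,v) partial derivatives along a word of directions
  (False = x-direction, True = v-direction).\<close>

fun pdw :: "(bool \<times> 3) list \<Rightarrow> phase_fun \<Rightarrow> phase_fun" where
  "pdw [] h = h"
| "pdw ((b, l) # ws) h = (if b then dv l else dx l) (pdw ws h)"

text \<open>"Sufficiently regular": all iterated x,v partial derivatives exist
  (classically), are jointly continuous in (t,x,v) on [0,Tb) x R^3 x R^3,
  and f is differentiable in t on (0,Tb) with continuous time derivative.\<close>

definition regular_sol :: "real \<Rightarrow> (real \<Rightarrow> phase_fun) \<Rightarrow> bool" where
  "regular_sol Tb f \<longleftrightarrow>
     (\<forall>ws. \<forall>t\<in>{0..<Tb}. \<forall>x v l.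
        ((\<lambda>s. pdw ws (f t) (x + s *\<^sub>R axis l 1) v) has_real_derivative dx l (pdw ws (f t)) x v) (at 0) \<and>
        ((\<lambda>s. pdw ws (f t) x (v + s *\<^sub>R axis l 1)) has_real_derivative dv l (pdw ws (f t)) x v) (at 0)) \<and>
     (\<forall>ws. continuous_on ({0..<Tb} \<times> UNIV \<times> UNIV) (\<lambda>(t, x, v). pdw ws (f t) x v)) \<and>
     (\<forall>t\<in>{0<..<Tb}. \<forall>x v. ((\<lambda>s. f s x v) has_real_derivative deriv (\<lambda>s. f s x v) t) (at t)) \<and>
     continuous_on ({0<..<Tb} \<times> UNIV \<times> UNIV) (\<lambda>(t, x, v). deriv (\<lambda>s. f s x v) t)"

definition landau_sol :: "real \<Rightarrow> real \<Rightarrow> (real \<Rightarrow> phase_fun) \<Rightarrow> bool" where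
  "landau_sol \<gamma> Tb f \<longleftrightarrow>
     (\<forall>t\<in>{0<..<Tb}. \<forall>x v.
        deriv (\<lambda>s. f s x v) t + (\<Sum>i\<in>UNIV. v$i * dx i (f t) x v)
        = (\<Sum>i\<in>UNIV. \<Sum>j\<in>UNIV. abar \<gamma> f i j t x v * dv i (dv j (f t)) x v)
          - cbar \<gamma> f t x v * f t x v)"

definition dfun :: "real \<Rightarrow> real \<Rightarrow> real \<Rightarrow> real" where
  "dfun d0 \<delta> t = d0 * (1 + (1 + t) powr (- \<delta>))"

end

theory Submission
  imports Defs
begin

lemma sob1d:
  fixes \<phi> \<phi>' :: "real \<Rightarrow> real"
  assumes d: "\<And>s. (\<phi> has_real_derivative \<phi>' s) (at s)" and c: "continuous_on UNIV \<phi>'"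
  shows "ennreal \<bar>\<phi> 0\<bar> \<le> (\<integral>\<^sup>+s. ennreal \<bar>\<phi> s\<bar> * indicator {0..1} s \<partial>lborel)
                          + (\<integral>\<^sup>+s. ennreal \<bar>\<phi>' s\<bar> * indicator {0..1} s \<partial>lborel)"
proof -
  have cphi: "continuous_on UNIV \<phi>"
    using d by (meson DERIV_isCont continuous_at_imp_continuous_on)
  have mphi[measurable]: "\<phi> \<in> borel_measurable borel" by (rule borel_measurable_continuous_onI[OF cphi])
  have ca: "continuous_on UNIV (\<lambda>s. \<bar>\<phi>' s\<bar>)" using c by (intro continuous_intros)
  define M where "M = integral {0..1} (\<lambda>s. \<bar>\<phi>' s\<bar>)"
  have intM: "((\<lambda>s. \<bar>\<phi>' s\<bar>) has_integral M) {0..1}"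
    unfolding M_def by (intro integrable_integral integrable_continuous_real continuous_on_subset[OF ca]) auto
  have M0: "0 \<le> M" using intM by (rule has_integral_nonneg) auto
  have key: "\<bar>\<phi> 0\<bar> \<le> \<bar>\<phi> s\<bar> + M" if s: "s \<in> {0..1}" for s
  proof -
    have ftc: "(\<phi>' has_integral (\<phi> s - \<phi> 0)) {0..s}"
      using s by (intro fundamental_theorem_of_calculus)
        (auto intro!: has_field_derivative_at_within d simp: has_real_derivative_iff_has_vector_derivative[symmetric])
    have i1: "(\<lambda>s. \<bar>\<phi>' s\<bar>) integrable_on {0..s}"
      by (intro integrable_continuous_real continuous_on_subset[OF ca]) auto
    have "\<bar>\<phi> s - \<phi> 0\<bar> \<le> integral {0..s} (\<lambda>s. \<bar>\<phi>' s\<bar>)"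
      using integral_norm_bound_integral[OF has_integral_integrable[OF ftc] i1] ftc
      by (simp add: integral_unique)
    also have "\<dots> \<le> M" unfolding M_def
      using s by (intro integral_subset_le i1 integrable_continuous_real continuous_on_subset[OF ca]) auto
    finally show ?thesis by linarith
  qed
  have "ennreal \<bar>\<phi> 0\<bar> = (\<integral>\<^sup>+s. ennreal \<bar>\<phi> 0\<bar> * indicator {0..1::real} s \<partial>lborel)"
    by (subst nn_integral_cmult_indicator) (auto simp: emeasure_lborel_Icc_eq)
  also have "\<dots> \<le> (\<integral>\<^sup>+s. (ennreal \<bar>\<phi> s\<bar> * indicator {0..1} s + ennreal M * indicator {0..1} s) \<partial>lborel)"
  proof (intro nn_integral_mono)
    fix x :: real
    have "ennreal \<bar>\<phi> 0\<bar> \<le> ennreal \<bar>\<phi> x\<bar> + ennreal M" if "x \<in> {0..1}"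
      using key[OF that] M0 by (metis abs_ge_zero ennreal_leI ennreal_plus)
    then show "ennreal \<bar>\<phi> 0\<bar> * indicator {0..1} x \<le> ennreal \<bar>\<phi> x\<bar> * indicator {0..1} x + ennreal M * indicator {0..1} x"
      by (auto split: split_indicator)
  qed
  also have "\<dots> = (\<integral>\<^sup>+s. ennreal \<bar>\<phi> s\<bar> * indicator {0..1} s \<partial>lborel) + ennreal M"
    by (subst nn_integral_add) (auto simp: nn_integral_cmult_indicator emeasure_lborel_Icc_eq)
  also have "ennreal M = (\<integral>\<^sup>+s. ennreal \<bar>\<phi>' s\<bar> * indicator {0..1} s \<partial>lborel)"
  proof -
    have "(\<lambda>x. ennreal (\<bar>\<phi>' x\<bar> * indicator {0..1} x)) = (\<lambda>s. ennreal \<bar>\<phi>' s\<bar> * indicator {0..1::real} s)"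
      by (auto split: split_indicator)
    then show ?thesis using nn_integral_has_integral_lebesgue[OF _ intM] by (simp add: mult.commute)
  qed
  finally show ?thesis .
qed

lemma sobdir:
  fixes u u' \<rho> :: "real^3 \<Rightarrow> real" and e :: "real^3"
  assumes d: "\<And>x. ((\<lambda>s. u (x + s *\<^sub>R e)) has_real_derivative u' x) (at 0)"
  and cu: "continuous_on UNIV u" and cu': "continuous_on UNIV u'" and cr: "continuous_on UNIV \<rho>"
  and rho: "\<And>x s. s \<in> {0..1} \<Longrightarrow> \<rho> x \<le> 4 * \<rho> (x + s *\<^sub>R e)" and r0: "\<And>x. 0 \<le> \<rho> x"
  shows "ennreal (\<rho> x * \<bar>u x\<bar>) \<le> 4 * (\<integral>\<^sup>+s. ennreal (\<rho> (x + s *\<^sub>R e) * \<bar>u (x + s *\<^sub>R e)\<bar>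
            + \<rho> (x + s *\<^sub>R e) * \<bar>u' (x + s *\<^sub>R e)\<bar>) * indicator {0..1} s \<partial>lborel)"
proof -
  define \<phi> where "\<phi> = (\<lambda>s::real. u (x + s *\<^sub>R e))"
  define \<phi>' where "\<phi>' = (\<lambda>s::real. u' (x + s *\<^sub>R e))"
  have cl: "continuous_on UNIV (\<lambda>s::real. x + s *\<^sub>R e)" by (intro continuous_intros)
  have cphi: "continuous_on UNIV \<phi>" unfolding \<phi>_def
    by (rule continuous_on_compose2[OF cu cl]) auto
  have cphi': "continuous_on UNIV \<phi>'" unfolding \<phi>'_def
    by (rule continuous_on_compose2[OF cu' cl]) auto
  have crl: "continuous_on UNIV (\<lambda>s::real. \<rho> (x + s *\<^sub>R e))"
    by (rule continuous_on_compose2[OF cr cl]) auto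
  have [measurable]: "\<phi> \<in> borel_measurable borel" "\<phi>' \<in> borel_measurable borel"
     "(\<lambda>s::real. \<rho> (x + s *\<^sub>R e)) \<in> borel_measurable borel"
     "(\<lambda>s::real. u (x + s *\<^sub>R e)) \<in> borel_measurable borel"
     "(\<lambda>s::real. u' (x + s *\<^sub>R e)) \<in> borel_measurable borel"
    using cphi cphi' crl unfolding \<phi>_def \<phi>'_def by (auto intro: borel_measurable_continuous_onI)
  have dphi: "(\<phi> has_real_derivative \<phi>' s) (at s)" for s
  proof -
    have "((\<lambda>r. \<phi> (r + s)) has_real_derivative \<phi>' s) (at 0)"
      using d[of "x + s *\<^sub>R e"] unfolding \<phi>_def \<phi>'_def by (simp add: algebra_simps scaleR_add_left)
    then show ?thesis using DERIV_shift[of \<phi> "\<phi>' s" 0 s] by simp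
  qed
  have S: "ennreal \<bar>\<phi> 0\<bar> \<le> (\<integral>\<^sup>+s. ennreal \<bar>\<phi> s\<bar> * indicator {0..1} s \<partial>lborel)
                          + (\<integral>\<^sup>+s. ennreal \<bar>\<phi>' s\<bar> * indicator {0..1} s \<partial>lborel)"
    by (rule sob1d[OF dphi cphi'])
  have "ennreal (\<rho> x * \<bar>u x\<bar>) = ennreal (\<rho> x) * ennreal \<bar>\<phi> 0\<bar>"
    unfolding \<phi>_def using r0 by (simp add: ennreal_mult)
  also have "\<dots> \<le> ennreal (\<rho> x) * ((\<integral>\<^sup>+s. ennreal \<bar>\<phi> s\<bar> * indicator {0..1} s \<partial>lborel)
                          + (\<integral>\<^sup>+s. ennreal \<bar>\<phi>' s\<bar> * indicator {0..1} s \<partial>lborel))"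
    using S by (rule mult_left_mono) auto
  also have "\<dots> = (\<integral>\<^sup>+s. ennreal (\<rho> x) * (ennreal \<bar>\<phi> s\<bar> * indicator {0..1} s + ennreal \<bar>\<phi>' s\<bar> * indicator {0..1} s) \<partial>lborel)"
    by (simp add: nn_integral_cmult nn_integral_add)
  also have "\<dots> \<le> (\<integral>\<^sup>+s. 4 * (ennreal (\<rho> (x + s *\<^sub>R e) * \<bar>u (x + s *\<^sub>R e)\<bar>
            + \<rho> (x + s *\<^sub>R e) * \<bar>u' (x + s *\<^sub>R e)\<bar>) * indicator {0..1} s) \<partial>lborel)"
  proof (intro nn_integral_mono)
    fix s :: real
    show "ennreal (\<rho> x) * (ennreal \<bar>\<phi> s\<bar> * indicator {0..1} s + ennreal \<bar>\<phi>' s\<bar> * indicator {0..1} s)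
         \<le> 4 * (ennreal (\<rho> (x + s *\<^sub>R e) * \<bar>u (x + s *\<^sub>R e)\<bar> + \<rho> (x + s *\<^sub>R e) * \<bar>u' (x + s *\<^sub>R e)\<bar>) * indicator {0..1} s)"
    proof (cases "s \<in> {0..1}")
      case True
      have "\<rho> x * (\<bar>\<phi> s\<bar> + \<bar>\<phi>' s\<bar>) \<le> 4 * \<rho> (x + s *\<^sub>R e) * (\<bar>\<phi> s\<bar> + \<bar>\<phi>' s\<bar>)"
        using rho[OF True] by (intro mult_right_mono) auto
      then have "ennreal (\<rho> x * (\<bar>\<phi> s\<bar> + \<bar>\<phi>' s\<bar>)) \<le> ennreal (4 * (\<rho> (x + s *\<^sub>R e) * \<bar>u (x + s *\<^sub>R e)\<bar> + \<rho> (x + s *\<^sub>R e) * \<bar>u' (x + s *\<^sub>R e)\<bar>))"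
        by (intro ennreal_leI) (simp add: \<phi>_def \<phi>'_def algebra_simps)
      moreover have "ennreal (4 * (\<rho> (x + s *\<^sub>R e) * \<bar>u (x + s *\<^sub>R e)\<bar> + \<rho> (x + s *\<^sub>R e) * \<bar>u' (x + s *\<^sub>R e)\<bar>))
          = 4 * ennreal (\<rho> (x + s *\<^sub>R e) * \<bar>u (x + s *\<^sub>R e)\<bar> + \<rho> (x + s *\<^sub>R e) * \<bar>u' (x + s *\<^sub>R e)\<bar>)"
        using r0[of "x + s *\<^sub>R e"] by (subst ennreal_mult) auto
      moreover have "ennreal (\<rho> x) * (ennreal \<bar>\<phi> s\<bar> + ennreal \<bar>\<phi>' s\<bar>) = ennreal (\<rho> x * (\<bar>\<phi> s\<bar> + \<bar>\<phi>' s\<bar>))"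
        using r0[of x] by (simp add: ennreal_mult ennreal_plus)
      ultimately show ?thesis using True
        by (simp add: distrib_left[symmetric] del: distrib_left)
    qed simp
  qed
  also have "\<dots> = 4 * (\<integral>\<^sup>+s. ennreal (\<rho> (x + s *\<^sub>R e) * \<bar>u (x + s *\<^sub>R e)\<bar>
            + \<rho> (x + s *\<^sub>R e) * \<bar>u' (x + s *\<^sub>R e)\<bar>) * indicator {0..1} s \<partial>lborel)"
    by (subst nn_integral_cmult[symmetric]) (auto simp: mult.assoc)
  finally show ?thesis .
qed

lemma nn_integral_cmult_le:
  fixes c :: ennreal
  assumes c: "c \<noteq> \<infinity>"
  shows "(\<integral>\<^sup>+x. c * f x \<partial>M) \<le> c * (\<integral>\<^sup>+x. f x \<partial>M)"
proof (cases "c = 0")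
  case True then show ?thesis by simp
next
  case False
  show ?thesis
    unfolding nn_integral_def[of M "\<lambda>x. c * f x"]
  proof (rule SUP_least, safe)
    fix g assume sg: "simple_function M g" and gle: "g \<le> (\<lambda>x. c * f x)"
    define h where "h = (\<lambda>x. g x / c)"
    have sh: "simple_function M h" unfolding h_def divide_ennreal_def using sg by auto
    have hle: "h x \<le> f x" for x
    proof -
      have "g x \<le> c * f x" using gle by (auto simp: le_fun_def)
      then have "g x / c \<le> (f x * c) / c" by (simp add: divide_right_mono_ennreal mult.commute)
      then show ?thesis unfolding h_def using False c by (simp add: ennreal_mult_divide_eq)
    qed
    have gh: "g = (\<lambda>x. c * h x)" unfolding h_def using False c
      by (auto simp: ennreal_times_divide ennreal_mult_divide_eq mult.commute[of c])
    have "integral\<^sup>S M g = c * integral\<^sup>S M h" unfolding gh using sh by simp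
    also have "\<dots> = c * integral\<^sup>N M h" using sh by (simp add: nn_integral_eq_simple_integral)
    also have "\<dots> \<le> c * (\<integral>\<^sup>+x. f x \<partial>M)"
      by (intro mult_left_mono nn_integral_mono hle) auto
    finally show "integral\<^sup>S M g \<le> c * (\<integral>\<^sup>+x. f x \<partial>M)" .
  qed
qed

lemma cont_sumlist:
  fixes P :: "(bool \<times> 3) list \<Rightarrow> real^3 \<Rightarrow> real" and \<rho> :: "real^3 \<Rightarrow> real"
  assumes c: "\<And>ws. continuous_on UNIV (P ws)" and cr: "continuous_on UNIV \<rho>"
  shows "continuous_on UNIV (\<lambda>z. \<Sum>ws\<leftarrow>S. \<rho> z * \<bar>P ws z\<bar>)"
  by (induction S) (auto intro!: continuous_intros c cr)

lemma meas_line: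
  fixes F :: "real^3 \<Rightarrow> real"
  assumes "continuous_on UNIV F"
  shows "(\<lambda>s::real. F (x + s *\<^sub>R e)) \<in> borel_measurable borel"
proof -
  have "continuous_on UNIV (\<lambda>s::real. F (x + s *\<^sub>R e))"
    by (rule continuous_on_compose2[OF assms]) (auto intro!: continuous_intros)
  then show ?thesis by (rule borel_measurable_continuous_onI)
qed

lemma sob_step:
  fixes P :: "(bool \<times> 3) list \<Rightarrow> real^3 \<Rightarrow> real" and \<rho> :: "real^3 \<Rightarrow> real"
  assumes d: "\<And>ws x. ((\<lambda>s. P ws (x + s *\<^sub>R axis l 1)) has_real_derivative P ((False,l)#ws) x) (at 0)"
  and c: "\<And>ws. continuous_on UNIV (P ws)" and cr: "continuous_on UNIV \<rho>"
  and rho: "\<And>x s. s \<in> {0..1} \<Longrightarrow> \<rho> x \<le> 4 * \<rho> (x + s *\<^sub>R axis l 1)" and r0: "\<And>x. 0 \<le> \<rho> x"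
  shows "ennreal (\<Sum>ws\<leftarrow>S. \<rho> x * \<bar>P ws x\<bar>) \<le> 4 * (\<integral>\<^sup>+s. ennreal (\<Sum>ws\<leftarrow>S @ map ((#) (False,l)) S.
            \<rho> (x + s *\<^sub>R axis l 1) * \<bar>P ws (x + s *\<^sub>R axis l 1)\<bar>) * indicator {0..1} s \<partial>lborel)"
proof (induction S)
  case Nil then show ?case by simp
next
  case (Cons ws S)
  let ?e = "axis l 1 :: real^3"
  define A where "A = (\<lambda>s::real. \<rho> (x + s *\<^sub>R ?e) * \<bar>P ws (x + s *\<^sub>R ?e)\<bar> + \<rho> (x + s *\<^sub>R ?e) * \<bar>P ((False,l)#ws) (x + s *\<^sub>R ?e)\<bar>)"
  define B where "B = (\<lambda>s::real. \<Sum>ws\<leftarrow>S @ map ((#) (False,l)) S. \<rho> (x + s *\<^sub>R ?e) * \<bar>P ws (x + s *\<^sub>R ?e)\<bar>)"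
  have mA[measurable]: "A \<in> borel_measurable borel" unfolding A_def
    by (rule meas_line) (auto intro!: continuous_intros c cr)
  have mB[measurable]: "B \<in> borel_measurable borel" unfolding B_def
    by (rule meas_line[OF cont_sumlist[OF c cr]])
  have A0: "0 \<le> A s" and B0: "0 \<le> B s" for s
    unfolding A_def B_def using r0 by (auto intro!: sum_list_nonneg add_nonneg_nonneg mult_nonneg_nonneg simp del: map_map)
  have S0: "0 \<le> (\<Sum>ws\<leftarrow>S. \<rho> x * \<bar>P ws x\<bar>)" using r0 by (auto intro!: sum_list_nonneg)
  have "ennreal (\<Sum>ws\<leftarrow>ws # S. \<rho> x * \<bar>P ws x\<bar>) = ennreal (\<rho> x * \<bar>P ws x\<bar>) + ennreal (\<Sum>ws\<leftarrow>S. \<rho> x * \<bar>P ws x\<bar>)"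
    using S0 r0[of x] by (simp add: ennreal_plus)
  also have "\<dots> \<le> 4 * (\<integral>\<^sup>+s. ennreal (A s) * indicator {0..1} s \<partial>lborel) + 4 * (\<integral>\<^sup>+s. ennreal (B s) * indicator {0..1} s \<partial>lborel)"
    apply (rule add_mono)
    subgoal unfolding A_def
      by (rule sobdir[OF d c c cr rho r0])
    subgoal using Cons.IH unfolding B_def .
    done
  also have "\<dots> = 4 * (\<integral>\<^sup>+s. ennreal (A s + B s) * indicator {0..1} s \<partial>lborel)"
    using A0 B0 by (simp add: nn_integral_add[symmetric] distrib_left[symmetric] ennreal_plus distrib_right del: distrib_left)
  also have "(\<lambda>s. A s + B s) = (\<lambda>s. \<Sum>ws\<leftarrow>(ws # S) @ map ((#) (False,l)) (ws # S). \<rho> (x + s *\<^sub>R ?e) * \<bar>P ws (x + s *\<^sub>R ?e)\<bar>)"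
    unfolding A_def B_def by (auto simp: algebra_simps)
  finally show ?case .
qed

lemma Basis3: "(Basis :: (real^3) set) = {axis 1 1, axis 2 1, axis 3 1}"
  by (auto simp add: Basis_vec_def UNIV_3)

lemma axis_ne: "axis (1::3) (1::real) \<noteq> axis 2 1" "axis (1::3) (1::real) \<noteq> axis 3 1" "axis (2::3) (1::real) \<noteq> axis 3 1"
  by (simp_all add: axis_eq_axis)

lemma iter3:
  fixes H :: "real^3 \<Rightarrow> ennreal"
  assumes [measurable]: "H \<in> borel_measurable borel"
  shows "(\<integral>\<^sup>+ y. H y \<partial>lborel) =
    (\<integral>\<^sup>+ c. \<integral>\<^sup>+ b. \<integral>\<^sup>+ a. H (a *\<^sub>R axis 1 1 + b *\<^sub>R axis 2 1 + c *\<^sub>R axis 3 1) \<partial>lborel \<partial>lborel \<partial>lborel)"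
proof -
  interpret P: product_sigma_finite "\<lambda>_::real^3. lborel::real measure" by standard
  define e1 e2 e3 where "e1 = (axis 1 1 :: real^3)" and "e2 = (axis 2 1 :: real^3)" and "e3 = (axis 3 1 :: real^3)"
  have B: "Basis = insert e1 (insert e2 {e3})" unfolding e1_def e2_def e3_def Basis3 by auto
  have d: "e1 \<noteq> e2" "e1 \<noteq> e3" "e2 \<noteq> e3" using axis_ne unfolding e1_def e2_def e3_def by auto
  have "(\<integral>\<^sup>+ y. H y \<partial>lborel) = (\<integral>\<^sup>+ f. H (\<Sum>b\<in>Basis. f b *\<^sub>R b) \<partial>(\<Pi>\<^sub>M b\<in>Basis. lborel))"
    by (subst lborel_eq) (simp add: nn_integral_distr)
  also have "\<dots> = (\<integral>\<^sup>+ f. H (f e1 *\<^sub>R e1 + f e2 *\<^sub>R e2 + f e3 *\<^sub>R e3) \<partial>(\<Pi>\<^sub>M b\<in>insert e1 (insert e2 {e3}). lborel))"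
    unfolding B using d by (simp add: add.assoc)
  also have "\<dots> = (\<integral>\<^sup>+ f. \<integral>\<^sup>+ a. H (a *\<^sub>R e1 + f e2 *\<^sub>R e2 + f e3 *\<^sub>R e3) \<partial>lborel \<partial>(\<Pi>\<^sub>M b\<in>insert e2 {e3}. lborel))"
    using d by (subst P.product_nn_integral_insert) auto
  also have "\<dots> = (\<integral>\<^sup>+ f. \<integral>\<^sup>+ b. \<integral>\<^sup>+ a. H (a *\<^sub>R e1 + b *\<^sub>R e2 + f e3 *\<^sub>R e3) \<partial>lborel \<partial>lborel \<partial>(\<Pi>\<^sub>M b\<in>{e3}. lborel))"
    using d by (subst P.product_nn_integral_insert) auto
  also have "\<dots> = (\<integral>\<^sup>+ c. \<integral>\<^sup>+ b. \<integral>\<^sup>+ a. H (a *\<^sub>R e1 + b *\<^sub>R e2 + c *\<^sub>R e3) \<partial>lborel \<partial>lborel \<partial>lborel)"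
    by (subst P.product_nn_integral_singleton) auto
  finally show ?thesis unfolding e1_def e2_def e3_def .
qed

lemma nn_integral_translate:
  fixes H :: "real^3 \<Rightarrow> ennreal"
  assumes [measurable]: "H \<in> borel_measurable borel"
  shows "(\<integral>\<^sup>+ y. H (c + y) \<partial>lborel) = (\<integral>\<^sup>+ y. H y \<partial>lborel)"
proof -
  have "(\<integral>\<^sup>+ y. H y \<partial>lborel) = (\<integral>\<^sup>+ y. H y \<partial>distr lborel borel ((+) c))"
    by (simp add: lborel_distr_plus)
  also have "\<dots> = (\<integral>\<^sup>+ y. H (c + y) \<partial>lborel)"
    by (subst nn_integral_distr) auto
  finally show ?thesis ..
qed

lemma ind_step:
  assumes "\<And>s. f s \<le> 4 * g s"
  shows "(\<integral>\<^sup>+s. f s * indicator {0..1::real} s \<partial>lborel) \<le> 4 * (\<integral>\<^sup>+s. g s \<partial>lborel)"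
proof -
  have "(\<integral>\<^sup>+s. f s * indicator {0..1::real} s \<partial>lborel) \<le> (\<integral>\<^sup>+s. 4 * g s \<partial>lborel)"
    using assms by (intro nn_integral_mono) (auto split: split_indicator)
  also have "\<dots> \<le> 4 * (\<integral>\<^sup>+s. g s \<partial>lborel)" by (rule nn_integral_cmult_le) simp
  finally show ?thesis .
qed

definition W0 :: "(bool \<times> 3) list list" where "W0 = [[]]"
definition "W1 = W0 @ map ((#) (False,3)) W0"
definition "W2 = W1 @ map ((#) (False,2)) W1"
definition "W3 = W2 @ map ((#) (False,1)) W2"

lemma sob3:
  fixes P :: "(bool \<times> 3) list \<Rightarrow> real^3 \<Rightarrow> real" and \<rho> :: "real^3 \<Rightarrow> real"
  assumes d: "\<And>l ws x. ((\<lambda>s. P ws (x + s *\<^sub>R axis l 1)) has_real_derivative P ((False,l)#ws) x) (at 0)"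
  and c: "\<And>ws. continuous_on UNIV (P ws)" and cr: "continuous_on UNIV \<rho>"
  and rho: "\<And>l x s. s \<in> {0..1} \<Longrightarrow> \<rho> x \<le> 4 * \<rho> (x + s *\<^sub>R axis l 1)" and r0: "\<And>x. 0 \<le> \<rho> x"
  shows "ennreal (\<rho> x * \<bar>P [] x\<bar>) \<le> 64 * (\<integral>\<^sup>+y. ennreal (\<Sum>ws\<leftarrow>W3. \<rho> y * \<bar>P ws y\<bar>) \<partial>lborel)"
proof -
  define G where "G = (\<lambda>S z. ennreal (\<Sum>ws\<leftarrow>S. \<rho> z * \<bar>P ws z\<bar>))"
  have st: "G S z \<le> 4 * (\<integral>\<^sup>+s. G (S @ map ((#) (False,l)) S) (z + s *\<^sub>R axis l 1) * indicator {0..1} s \<partial>lborel)" for S z l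
    unfolding G_def by (rule sob_step) (auto intro: d c cr rho r0)
  have mG[measurable]: "G W3 \<in> borel_measurable borel" unfolding G_def
    by (intro measurable_compose[OF _ measurable_ennreal] borel_measurable_continuous_onI cont_sumlist c cr)
  let ?e1 = "axis 1 1 :: real^3" and ?e2 = "axis 2 1 :: real^3" and ?e3 = "axis 3 1 :: real^3"
  have "ennreal (\<rho> x * \<bar>P [] x\<bar>) = G W0 x" unfolding G_def W0_def by simp
  also have "\<dots> \<le> 4 * (\<integral>\<^sup>+s3. G W1 (x + s3 *\<^sub>R ?e3) * indicator {0..1} s3 \<partial>lborel)"
    using st[of W0 x 3] unfolding W1_def .
  also have "\<dots> \<le> 4 * (4 * (\<integral>\<^sup>+s3. 4 * (\<integral>\<^sup>+s2. (\<integral>\<^sup>+s1. G W3 (x + s3 *\<^sub>R ?e3 + s2 *\<^sub>R ?e2 + s1 *\<^sub>R ?e1) \<partial>lborel) \<partial>lborel) \<partial>lborel))"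
  proof (intro mult_left_mono ind_step)
    fix s3 :: real
    have "G W1 (x + s3 *\<^sub>R ?e3) \<le> 4 * (\<integral>\<^sup>+s2. G W2 (x + s3 *\<^sub>R ?e3 + s2 *\<^sub>R ?e2) * indicator {0..1} s2 \<partial>lborel)"
      using st[of W1 "x + s3 *\<^sub>R ?e3" 2] unfolding W2_def .
    also have "\<dots> \<le> 4 * (4 * (\<integral>\<^sup>+s2. (\<integral>\<^sup>+s1. G W3 (x + s3 *\<^sub>R ?e3 + s2 *\<^sub>R ?e2 + s1 *\<^sub>R ?e1) \<partial>lborel) \<partial>lborel))"
    proof (intro mult_left_mono ind_step)
      fix s2 :: real
      have "G W2 (x + s3 *\<^sub>R ?e3 + s2 *\<^sub>R ?e2) \<le> 4 * (\<integral>\<^sup>+s1. G W3 (x + s3 *\<^sub>R ?e3 + s2 *\<^sub>R ?e2 + s1 *\<^sub>R ?e1) * indicator {0..1} s1 \<partial>lborel)"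
        using st[of W2 "x + s3 *\<^sub>R ?e3 + s2 *\<^sub>R ?e2" 1] unfolding W3_def .
      also have "\<dots> \<le> 4 * (\<integral>\<^sup>+s1. G W3 (x + s3 *\<^sub>R ?e3 + s2 *\<^sub>R ?e2 + s1 *\<^sub>R ?e1) \<partial>lborel)"
        by (intro mult_left_mono nn_integral_mono) (auto split: split_indicator)
      finally show "G W2 (x + s3 *\<^sub>R ?e3 + s2 *\<^sub>R ?e2) \<le> \<dots>" .
    qed auto
    finally show "G W1 (x + s3 *\<^sub>R ?e3) \<le> 4 * (4 * (\<integral>\<^sup>+s2. (\<integral>\<^sup>+s1. G W3 (x + s3 *\<^sub>R ?e3 + s2 *\<^sub>R ?e2 + s1 *\<^sub>R ?e1) \<partial>lborel) \<partial>lborel))" .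
  qed auto
  also have "\<dots> \<le> 4 * (4 * (4 * (\<integral>\<^sup>+s3. (\<integral>\<^sup>+s2. (\<integral>\<^sup>+s1. G W3 (x + s3 *\<^sub>R ?e3 + s2 *\<^sub>R ?e2 + s1 *\<^sub>R ?e1) \<partial>lborel) \<partial>lborel) \<partial>lborel)))"
    by (intro mult_left_mono nn_integral_cmult_le) auto
  also have "(\<integral>\<^sup>+s3. (\<integral>\<^sup>+s2. (\<integral>\<^sup>+s1. G W3 (x + s3 *\<^sub>R ?e3 + s2 *\<^sub>R ?e2 + s1 *\<^sub>R ?e1) \<partial>lborel) \<partial>lborel) \<partial>lborel)
      = (\<integral>\<^sup>+y. G W3 (x + y) \<partial>lborel)"
    by (subst iter3[of "\<lambda>y. G W3 (x + y)"]) (auto simp: algebra_simps)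
  also have "\<dots> = (\<integral>\<^sup>+y. G W3 y \<partial>lborel)"
    by (rule nn_integral_translate) simp
  finally show ?thesis unfolding G_def by (simp add: mult.assoc[symmetric])
qed

lemma two_ab: fixes a b :: real assumes "1 \<le> a" "1 \<le> b" shows "a + b \<le> 2 * a * b"
proof -
  have h: "0 \<le> (a - 1) * (b - 1)" using assms by simp
  have "(a - 1) * (b - 1) = a * b - a - b + 1" by (simp add: algebra_simps)
  then show ?thesis using h assms by linarith
qed
lemma onepq: fixes p q :: real assumes "0 \<le> p" "0 \<le> q"
  shows "(1 + p + q)^2 \<le> 4 * (1 + p^2) * (1 + q^2)"
proof -
  have "0 \<le> (p - 1)^2 + (q - 1)^2 + (p - q)^2 + 4 * p^2 * q^2 + 1 + p^2 + q^2" by simp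
  then show ?thesis by (simp add: power2_eq_square algebra_simps)
qed

lemma japan_ge1: "1 \<le> japan z"
  unfolding japan_def by simp
lemma japan_pos: "0 < japan z"
  using japan_ge1[of z] by linarith
lemma japan_ge_norm: "norm z \<le> japan z"
  unfolding japan_def by (rule real_le_rsqrt) simp
lemma japan_sq: "(japan z)^2 = 1 + (norm z)^2"
  unfolding japan_def by simp

lemma akern_bound:
  fixes z :: "real^3"
  assumes "0 \<le> \<gamma>"
  shows "\<bar>akern \<gamma> i j z\<bar> \<le> norm z powr (\<gamma> + 2)"
proof (cases "z = 0")
  case True then show ?thesis by (simp add: akern_def)
next
  case False
  then have n0: "0 < norm z" by simp
  have ci: "\<bar>z$i\<bar> \<le> norm z" and cj: "\<bar>z$j\<bar> \<le> norm z" by (rule component_le_norm_cart)+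
  have m: "\<bar>(if i = j then 1 else 0) - z$i * z$j / (norm z)^2\<bar> \<le> 1"
  proof (cases "i = j")
    case True
    have "(z$i)^2 \<le> (norm z)^2" using ci by (metis abs_ge_zero power2_abs power_mono)
    then have "z$i * z$i / (norm z)^2 \<le> 1" using n0 by (simp add: power2_eq_square)
    moreover have "0 \<le> z$i * z$i / (norm z)^2" by simp
    ultimately show ?thesis using True by simp
  next
    case False
    have "\<bar>z$i * z$j\<bar> \<le> norm z * norm z" using ci cj by (simp add: abs_mult mult_mono)
    then have "\<bar>z$i * z$j / (norm z)^2\<bar> \<le> 1" using n0 by (simp add: power2_eq_square abs_div)
    then show ?thesis using False by simp
  qed
  have "\<bar>akern \<gamma> i j z\<bar> = \<bar>(if i = j then 1 else 0) - z$i * z$j / (norm z)^2\<bar> * norm z powr (\<gamma> + 2)"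
    unfolding akern_def by (simp add: abs_mult)
  also have "\<dots> \<le> 1 * norm z powr (\<gamma> + 2)" by (rule mult_right_mono[OF m]) simp
  finally show ?thesis by simp
qed

lemma powr_g2_bound:
  fixes r :: real
  assumes "0 \<le> r" "0 \<le> \<gamma>" "\<gamma> \<le> 1"
  shows "r powr (\<gamma> + 2) \<le> (1 + r) * r^2"
proof (cases "r = 0")
  case True then show ?thesis by simp
next
  case False
  then have r0: "0 < r" using assms by simp
  have "r powr \<gamma> \<le> 1 + r"
  proof (cases "r \<le> 1")
    case True then have "r powr \<gamma> \<le> 1" using assms by (intro powr_le1) auto
    then show ?thesis using r0 by simp
  next
    case False
    then have "r powr \<gamma> \<le> r powr 1" using assms by (intro powr_mono) auto
    then show ?thesis using r0 by simp
  qed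
  then have "r powr \<gamma> * r^2 \<le> (1 + r) * r^2" by (rule mult_right_mono) simp
  moreover have "r powr (\<gamma> + 2) = r powr \<gamma> * r^2" using r0 by (simp add: powr_add powr_realpow)
  ultimately show ?thesis by simp
qed

lemma kernel_weight_bound:
  fixes v w x :: "real^3"
  assumes t: "0 \<le> t" and g: "0 \<le> \<gamma>" "\<gamma> \<le> 1"
  shows "norm (v - w) powr (\<gamma> + 2) \<le> 8 / (1 + t)^2 * japan v * (japan (x - (t + 1) *\<^sub>R v))^2
           * (japan w * (japan (x - (t + 1) *\<^sub>R w))^2)"
proof -
  let ?r = "norm (v - w)"
  let ?a = "x - (t + 1) *\<^sub>R v" and ?b = "x - (t + 1) *\<^sub>R w"
  have "?b - ?a = (1 + t) *\<^sub>R (v - w)" by (simp add: algebra_simps)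
  then have "(1 + t) * ?r = norm (?b - ?a)"
    using t by simp
  also have "\<dots> \<le> norm ?a + norm ?b" using norm_triangle_ineq4[of ?b ?a] by simp
  also have "\<dots> \<le> japan ?a + japan ?b" using japan_ge_norm by (intro add_mono) auto
  also have "\<dots> \<le> 2 * japan ?a * japan ?b"
    using two_ab[OF japan_ge1[of ?a] japan_ge1[of ?b]] by simp
  finally have r1: "(1 + t) * ?r \<le> 2 * japan ?a * japan ?b" .
  have "((1 + t) * ?r)^2 \<le> (2 * japan ?a * japan ?b)^2"
    using r1 t by (intro power_mono) auto
  then have "(1 + t)^2 * ?r^2 \<le> 4 * (japan ?a)^2 * (japan ?b)^2"
    by (simp only: power_mult_distrib) (simp add: mult.assoc)
  moreover have "0 < (1 + t)^2" using t by simp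
  ultimately have r2: "?r^2 \<le> 4 * (japan ?a)^2 * (japan ?b)^2 / (1 + t)^2"
    by (simp add: pos_le_divide_eq mult.commute)
  have "1 + ?r \<le> 1 + norm v + norm w" using norm_triangle_ineq4[of v w] by simp
  also have "\<dots> \<le> 2 * japan v * japan w"
  proof (rule power2_le_imp_le)
    have "(1 + norm v + norm w)^2 \<le> 4 * (1 + (norm v)^2) * (1 + (norm w)^2)" by (rule onepq) auto
    also have "\<dots> = (2 * japan v * japan w)^2" by (simp add: japan_sq power_mult_distrib)
    finally show "(1 + norm v + norm w)^2 \<le> (2 * japan v * japan w)^2" .
    show "0 \<le> 2 * japan v * japan w" using japan_pos[of v] japan_pos[of w] by simp
  qed
  finally have r3: "1 + ?r \<le> 2 * japan v * japan w" .
  have "?r powr (\<gamma> + 2) \<le> (1 + ?r) * ?r^2" by (rule powr_g2_bound) (use g in auto)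
  also have "\<dots> \<le> (2 * japan v * japan w) * (4 * (japan ?a)^2 * (japan ?b)^2 / (1 + t)^2)"
    using r2 r3 japan_pos[of v] japan_pos[of w] by (intro mult_mono) auto
  also have "\<dots> = 8 / (1 + t)^2 * japan v * (japan ?a)^2 * (japan w * (japan ?b)^2)"
    by (simp add: field_simps)
  finally show ?thesis .
qed

lemma abar_bound:
  assumes t: "0 \<le> t" and g: "0 \<le> \<gamma>" "\<gamma> \<le> 1"
  shows "ennreal \<bar>abar \<gamma> f i j t x v\<bar> \<le> ennreal (8 / (1 + t)^2 * japan v * (japan (x - (t + 1) *\<^sub>R v))^2)
      * (\<integral>\<^sup>+w. ennreal (japan w * (japan (x - (t + 1) *\<^sub>R w))^2 * \<bar>f t x w\<bar>) \<partial>lborel)"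
proof -
  let ?K = "8 / (1 + t)^2 * japan v * (japan (x - (t + 1) *\<^sub>R v))^2"
  have K0: "0 \<le> ?K" by (intro mult_nonneg_nonneg divide_nonneg_nonneg) (auto intro: less_imp_le japan_pos)
  have "ennreal \<bar>abar \<gamma> f i j t x v\<bar> \<le> (\<integral>\<^sup>+w. ennreal (norm (akern \<gamma> i j (v - w) * f t x w)) \<partial>lborel)"
  proof (cases "integrable lborel (\<lambda>w. akern \<gamma> i j (v - w) * f t x w)")
    case True
    then have "norm (abar \<gamma> f i j t x v) \<le> (\<integral>\<^sup>+w. ennreal (norm (akern \<gamma> i j (v - w) * f t x w)) \<partial>lborel)"
      unfolding abar_def by (rule integral_norm_bound_ennreal)
    then show ?thesis by simp
  next
    case False
    then show ?thesis unfolding abar_def by (simp add: not_integrable_integral_eq)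
  qed
  also have "\<dots> \<le> (\<integral>\<^sup>+w. ennreal ?K * ennreal (japan w * (japan (x - (t + 1) *\<^sub>R w))^2 * \<bar>f t x w\<bar>) \<partial>lborel)"
  proof (intro nn_integral_mono)
    fix w :: "real^3"
    have "\<bar>akern \<gamma> i j (v - w)\<bar> \<le> ?K * (japan w * (japan (x - (t + 1) *\<^sub>R w))^2)"
      using akern_bound[OF g(1), of i j "v - w"] kernel_weight_bound[OF t g, of v w x] by linarith
    then have "\<bar>akern \<gamma> i j (v - w)\<bar> * \<bar>f t x w\<bar> \<le> ?K * (japan w * (japan (x - (t + 1) *\<^sub>R w))^2) * \<bar>f t x w\<bar>"
      by (rule mult_right_mono) simp
    moreover have "0 \<le> japan w * (japan (x - (t + 1) *\<^sub>R w))^2 * \<bar>f t x w\<bar>"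
      using japan_pos[of w] by simp
    ultimately show "ennreal (norm (akern \<gamma> i j (v - w) * f t x w)) \<le> ennreal ?K * ennreal (japan w * (japan (x - (t + 1) *\<^sub>R w))^2 * \<bar>f t x w\<bar>)"
      using K0 by (simp add: abs_mult ennreal_mult[symmetric] mult.assoc ennreal_leI del: ennreal_mult ennreal_mult' ennreal_mult'')
  qed
  also have "\<dots> \<le> ennreal ?K * (\<integral>\<^sup>+w. ennreal (japan w * (japan (x - (t + 1) *\<^sub>R w))^2 * \<bar>f t x w\<bar>) \<partial>lborel)"
    by (rule nn_integral_cmult_le) simp
  finally show ?thesis .
qed

lemma int_cauchy: "(\<integral>\<^sup>+s. ennreal (inverse (1 + s^2)) \<partial>lborel) \<le> ennreal pi"
proof -
  let ?g = "\<lambda>s::real. inverse (1 + s^2)"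
  have mg[measurable]: "?g \<in> borel_measurable borel" by measurable
  have A: "(\<integral>\<^sup>+s. ennreal (?g s) * indicator {0..} s \<partial>lborel) = ennreal (pi/2)"
  proof -
    have "(\<integral>\<^sup>+s. ennreal (?g s) * indicator {0..} s \<partial>lborel) = ennreal (pi/2 - arctan 0)"
      by (rule nn_integral_FTC_atLeast[where F=arctan]) (auto intro: DERIV_arctan tendsto_arctan_at_top)
    then show ?thesis by simp
  qed
  have m2: "(\<lambda>s. ennreal (?g s) * indicator {0..} s) \<in> borel_measurable borel" by measurable
  have B: "(\<integral>\<^sup>+s. ennreal (?g (-s)) * indicator {0..} (-s) \<partial>lborel) = ennreal (pi/2)"
  proof -
    have "(\<integral>\<^sup>+s. ennreal (?g s) * indicator {0..} s \<partial>lborel) = ennreal \<bar>-1\<bar> * (\<integral>\<^sup>+s. ennreal (?g (0 + -1 * s)) * indicator {0..} (0 + -1 * s) \<partial>lborel)"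
      by (rule nn_integral_real_affine[OF m2]) auto
    then have "(\<integral>\<^sup>+s. ennreal (?g (-s)) * indicator {0..} (-s) \<partial>lborel) = (\<integral>\<^sup>+s. ennreal (?g s) * indicator {0..} s \<partial>lborel)"
      by simp
    then show ?thesis using A by simp
  qed
  have "(\<integral>\<^sup>+s. ennreal (?g s) \<partial>lborel) \<le> (\<integral>\<^sup>+s. ennreal (?g s) * indicator {0..} s + ennreal (?g (-s)) * indicator {0..} (-s) \<partial>lborel)"
    by (intro nn_integral_mono) (auto split: split_indicator)
  also have "\<dots> = ennreal (pi/2) + ennreal (pi/2)"
    by (subst nn_integral_add) (auto simp: A B[simplified])
  also have "\<dots> = ennreal pi" by (simp flip: ennreal_plus)
  finally show ?thesis .
qed

lemma card_Basis3: "card (Basis :: (real^3) set) = 3"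
  by simp

lemma J_bound: "(\<integral>\<^sup>+y. ennreal (1 / (1 + (norm (y::real^3))^2)^3) \<partial>lborel) \<le> ennreal (pi^3)"
proof -
  have pt: "1 / (1 + (norm y)^2)^3 \<le> (\<Prod>b\<in>Basis. inverse (1 + (y \<bullet> b)^2))" for y :: "real^3"
  proof -
    have "(\<Prod>b\<in>Basis. (1 + (y \<bullet> b)^2)) \<le> (\<Prod>b\<in>(Basis::(real^3) set). (1 + (norm y)^2))"
    proof (rule prod_mono)
      fix b :: "real^3" assume b: "b \<in> Basis"
      have "\<bar>y \<bullet> b\<bar> \<le> norm y" by (rule Basis_le_norm[OF b])
      then have "(y \<bullet> b)^2 \<le> (norm y)^2" by (metis abs_ge_zero power2_abs power_mono)
      then show "0 \<le> 1 + (y \<bullet> b)^2 \<and> 1 + (y \<bullet> b)^2 \<le> 1 + (norm y)^2" by simp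
    qed
    also have "\<dots> = (1 + (norm y)^2)^3" by simp
    finally have le: "(\<Prod>b\<in>Basis. (1 + (y \<bullet> b)^2)) \<le> (1 + (norm y)^2)^3" .
    have pos: "0 < (\<Prod>b\<in>(Basis::(real^3) set). (1 + (y \<bullet> b)^2))"
      by (intro prod_pos) (auto intro: add_pos_nonneg)
    have "1 / (1 + (norm y)^2)^3 \<le> 1 / (\<Prod>b\<in>Basis. (1 + (y \<bullet> b)^2))"
      using le pos by (intro divide_left_mono) (auto intro!: mult_pos_pos add_pos_nonneg zero_less_power)
    also have "\<dots> = (\<Prod>b\<in>Basis. inverse (1 + (y \<bullet> b)^2))"
      by (simp add: prod_inversef[symmetric] divide_inverse)
    finally show ?thesis .
  qed
  have "(\<integral>\<^sup>+y. ennreal (1 / (1 + (norm (y::real^3))^2)^3) \<partial>lborel)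
      \<le> (\<integral>\<^sup>+y. (\<Prod>b\<in>Basis. ennreal (inverse (1 + ((y::real^3) \<bullet> b)^2))) \<partial>lborel)"
    using pt by (intro nn_integral_mono) (auto simp: prod_ennreal intro!: ennreal_leI)
  also have "\<dots> = (\<Prod>b\<in>(Basis::(real^3) set). (\<integral>\<^sup>+s. ennreal (inverse (1 + s^2)) \<partial>lborel))"
    by (rule nn_integral_lborel_prod[where f="\<lambda>b s. ennreal (inverse (1 + s^2))"]) auto
  also have "\<dots> = (\<integral>\<^sup>+s. ennreal (inverse (1 + s^2)) \<partial>lborel) ^ 3" by simp
  also have "\<dots> \<le> (ennreal pi) ^ 3"
    by (intro power_mono int_cauchy) auto
  also have "\<dots> = ennreal (pi^3)" by (simp add: ennreal_power)
  finally show ?thesis .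
qed

lemma continuous_on_japan[continuous_intros]:
  "continuous_on S f \<Longrightarrow> continuous_on S (\<lambda>z. japan (f z))"
  unfolding japan_def by (intro continuous_intros)

lemma meas_pair:
  fixes F :: "(real^3) \<times> (real^3) \<Rightarrow> real"
  assumes "continuous_on UNIV F"
  shows "(\<lambda>z. ennreal (F z)) \<in> borel_measurable (lborel \<Otimes>\<^sub>M lborel)"
  unfolding lborel_prod measurable_lborel2
  by (intro measurable_compose[OF _ measurable_ennreal] borel_measurable_continuous_onI assms)

lemma meas_single:
  fixes F :: "real^3 \<Rightarrow> real"
  assumes "continuous_on UNIV F"
  shows "(\<lambda>z. ennreal (F z)) \<in> borel_measurable lborel"
  unfolding measurable_lborel2
  by (intro measurable_compose[OF _ measurable_ennreal] borel_measurable_continuous_onI assms)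

lemma amgm_lam:
  fixes A B lam :: real
  assumes "0 < lam" "0 \<le> A" "0 \<le> B"
  shows "A * B \<le> lam * A^2 + B^2 / lam"
proof -
  have "0 \<le> (lam * A - B)^2" by simp
  then have "2 * lam * (A * B) \<le> (lam * A)^2 + B^2" by (simp add: power2_eq_square algebra_simps)
  then have "2 * (A * B) \<le> lam * A^2 + B^2 / lam" using assms
    by (simp add: field_simps power2_eq_square)
  then show ?thesis using assms mult_nonneg_nonneg[of A B] by linarith
qed

lemma J_translate:
  fixes c :: "real^3"
  shows "(\<integral>\<^sup>+y. ennreal (1 / (1 + (norm (y - c))^2)^3) \<partial>lborel) \<le> ennreal (pi^3)"
proof -
  have m: "(\<lambda>y::real^3. ennreal (1 / (1 + (norm y)^2)^3)) \<in> borel_measurable borel"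
    using meas_single[of "\<lambda>y::real^3. 1 / (1 + (norm y)^2)^3"]
    by (simp add: continuous_intros add_pos_nonneg)
  have "(\<integral>\<^sup>+y. ennreal (1 / (1 + (norm (y - c))^2)^3) \<partial>lborel) = (\<integral>\<^sup>+y. ennreal (1 / (1 + (norm (-c + y))^2)^3) \<partial>lborel)"
    by simp
  also have "\<dots> = (\<integral>\<^sup>+y. ennreal (1 / (1 + (norm (y::real^3))^2)^3) \<partial>lborel)"
    using nn_integral_translate[OF m, of "-c"] by simp
  also have "\<dots> \<le> ennreal (pi^3)" by (rule J_bound)
  finally show ?thesis .
qed

lemma japan_pow_le_powr:
  assumes "real n \<le> a"
  shows "japan z ^ n \<le> japan z powr a"
proof -
  have "japan z ^ n = japan z powr (real n)" using japan_pos[of z] by (simp add: powr_realpow)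
  also have "\<dots> \<le> japan z powr a" using assms japan_ge1[of z] by (intro powr_mono) auto
  finally show ?thesis .
qed

lemma term_bound:
  fixes p :: "real^3 \<Rightarrow> real^3 \<Rightarrow> real" and c :: "real^3 \<Rightarrow> real" and t lam nu om :: real and E :: ennreal
  assumes cont: "continuous_on UNIV (\<lambda>z::(real^3)\<times>(real^3). p (fst z) (snd z))"
  and c1: "\<And>w. 1 \<le> c w" and nu: "4 \<le> nu" and om: "5 \<le> om" and lam: "0 < lam"
  and L: "(\<integral>\<^sup>+y. \<integral>\<^sup>+w. ennreal ((japan w powr nu * japan (y - (t+1) *\<^sub>R w) powr om * (c w * p y w))^2) \<partial>lborel \<partial>lborel) \<le> E"
  shows "(\<integral>\<^sup>+w. \<integral>\<^sup>+y. ennreal (japan w * (japan (y - (t+1) *\<^sub>R w))^2 * \<bar>p y w\<bar>) \<partial>lborel \<partial>lborel)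
     \<le> ennreal lam * ennreal (pi^3) * ennreal (pi^3) + ennreal (1/lam) * E"
proof -
  define q where "q = (\<lambda>w::real^3. 1 / (1 + (norm w)^2)^3)"
  define X where "X = (\<lambda>y w. lam * q w * q (y - (t+1) *\<^sub>R w))"
  define Y where "Y = (\<lambda>y w. (1/lam) * (japan w ^ 4 * japan (y - (t+1) *\<^sub>R w) ^ 5 * p y w)^2)"
  have q0: "0 \<le> q w" for w unfolding q_def by simp
  have X0: "0 \<le> X y w" for y w unfolding X_def using lam q0 by simp
  have Y0: "0 \<le> Y y w" for y w unfolding Y_def using lam by simp
  have cq: "continuous_on S (\<lambda>z. q (f z))" if "continuous_on S f" for S and f :: "'a::topological_space \<Rightarrow> real^3"
  proof -
    have "1 + (norm v)^2 \<noteq> 0" for v :: "real^3"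
    proof -
      have "0 < 1 + (norm v)^2" by (simp add: add_pos_nonneg)
      then show ?thesis by simp
    qed
    then show ?thesis unfolding q_def by (intro continuous_intros that) auto
  qed
  have cc: "continuous_on UNIV (\<lambda>x. p (fst (h x)) (snd (h x)))" if "continuous_on UNIV h" for h :: "'a::topological_space \<Rightarrow> (real^3)\<times>(real^3)"
  proof -
    have "continuous_on UNIV ((\<lambda>z. p (fst z) (snd z)) \<circ> h)"
      by (rule continuous_on_compose[OF that continuous_on_subset[OF cont]]) simp
    then show ?thesis by (simp add: comp_def)
  qed
  have cont_sw: "continuous_on UNIV (\<lambda>z::(real^3)\<times>(real^3). p (snd z) (fst z))"
    using cc[of "\<lambda>z. (snd z, fst z)"] by (simp add: continuous_intros)
  have cont_y: "continuous_on UNIV (\<lambda>y. p y w)" for w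
    using cc[of "\<lambda>y. (y, w)"] by (simp add: continuous_intros)
  have cont_w: "continuous_on UNIV (\<lambda>w. p y w)" for y
    using cc[of "\<lambda>w. (y, w)"] by (simp add: continuous_intros)
  have cX: "continuous_on UNIV (\<lambda>z::(real^3)\<times>(real^3). lam * q (fst z) * q (snd z - (t+1) *\<^sub>R fst z))"
    by (intro continuous_intros cq)
  have cY: "continuous_on UNIV (\<lambda>z::(real^3)\<times>(real^3). (1/lam) * (japan (fst z) ^ 4 * japan (snd z - (t+1) *\<^sub>R fst z) ^ 5 * p (snd z) (fst z))^2)"
    by (intro continuous_intros cont_sw)
  have cY': "continuous_on UNIV (\<lambda>z::(real^3)\<times>(real^3). (1/lam) * (japan (snd z) ^ 4 * japan (fst z - (t+1) *\<^sub>R snd z) ^ 5 * p (fst z) (snd z))^2)"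
    by (intro continuous_intros cont)
  have cXy: "continuous_on UNIV (\<lambda>y. lam * q w * q (y - (t+1) *\<^sub>R w))" for w
    by (intro continuous_intros cq)
  have cYy: "continuous_on UNIV (\<lambda>y. (1/lam) * (japan w ^ 4 * japan (y - (t+1) *\<^sub>R w) ^ 5 * p y w)^2)" for w
    by (intro continuous_intros cont_y)
  have mX: "(\<lambda>(w, y). ennreal (X y w)) \<in> borel_measurable (lborel \<Otimes>\<^sub>M lborel)"
    using meas_pair[OF cX] by (simp add: X_def case_prod_beta)
  have mY: "(\<lambda>(w, y). ennreal (Y y w)) \<in> borel_measurable (lborel \<Otimes>\<^sub>M lborel)"
    using meas_pair[OF cY] by (simp add: Y_def case_prod_beta)
  have mY': "(\<lambda>(y, w). ennreal (Y y w)) \<in> borel_measurable (lborel \<Otimes>\<^sub>M lborel)"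
    using meas_pair[OF cY'] by (simp add: Y_def case_prod_beta)
  have mXy: "(\<lambda>y. ennreal (X y w)) \<in> borel_measurable lborel" for w
    using meas_single[OF cXy] by (simp add: X_def)
  have mYy: "(\<lambda>y. ennreal (Y y w)) \<in> borel_measurable lborel" for w
    using meas_single[OF cYy] by (simp add: Y_def)
  have pt: "japan w * (japan (y - (t+1) *\<^sub>R w))^2 * \<bar>p y w\<bar> \<le> X y w + Y y w" for y w
  proof -
    let ?a = "japan w" and ?b = "japan (y - (t+1) *\<^sub>R w)"
    have a0: "0 < ?a" and b0: "0 < ?b" by (rule japan_pos)+
    define A where "A = 1 / (?a^3 * ?b^3)"
    define B where "B = ?a^4 * ?b^5 * \<bar>p y w\<bar>"
    have "A * B = ?a * ?b^2 * \<bar>p y w\<bar>" unfolding A_def B_def using a0 b0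
      by (simp add: field_simps power_numeral_reduce)
    moreover have "A * B \<le> lam * A^2 + B^2 / lam"
      by (rule amgm_lam) (use lam a0 b0 in \<open>auto simp: A_def B_def\<close>)
    moreover have "lam * A^2 = X y w"
    proof -
      have "A^2 = 1 / ((?a^2)^3 * (?b^2)^3)" unfolding A_def by (simp add: power_mult_distrib power_divide flip: power_mult)
      then show ?thesis unfolding X_def q_def by (simp add: japan_sq)
    qed
    moreover have "B^2 / lam = Y y w" unfolding B_def Y_def by (simp add: power_mult_distrib)
    ultimately show ?thesis by simp
  qed
  have "(\<integral>\<^sup>+w. \<integral>\<^sup>+y. ennreal (japan w * (japan (y - (t+1) *\<^sub>R w))^2 * \<bar>p y w\<bar>) \<partial>lborel \<partial>lborel)
      \<le> (\<integral>\<^sup>+w. \<integral>\<^sup>+y. ennreal (X y w) + ennreal (Y y w) \<partial>lborel \<partial>lborel)"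
    using pt X0 Y0 by (intro nn_integral_mono) (simp add: ennreal_plus[symmetric] ennreal_leI del: ennreal_plus)
  also have "\<dots> = (\<integral>\<^sup>+w. (\<integral>\<^sup>+y. ennreal (X y w) \<partial>lborel) + (\<integral>\<^sup>+y. ennreal (Y y w) \<partial>lborel) \<partial>lborel)"
    by (intro nn_integral_cong nn_integral_add mXy mYy)
  also have "\<dots> = (\<integral>\<^sup>+w. \<integral>\<^sup>+y. ennreal (X y w) \<partial>lborel \<partial>lborel) + (\<integral>\<^sup>+w. \<integral>\<^sup>+y. ennreal (Y y w) \<partial>lborel \<partial>lborel)"
    by (intro nn_integral_add lborel.borel_measurable_nn_integral mX mY)
  also have "\<dots> \<le> ennreal lam * ennreal (pi^3) * ennreal (pi^3) + ennreal (1/lam) * E"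
  proof (rule add_mono)
    have "(\<integral>\<^sup>+w. \<integral>\<^sup>+y. ennreal (X y w) \<partial>lborel \<partial>lborel) \<le> (\<integral>\<^sup>+w. ennreal (pi^3) * ennreal lam * ennreal (q w) \<partial>lborel)"
    proof (intro nn_integral_mono)
      fix w :: "real^3"
      have "(\<integral>\<^sup>+y. ennreal (X y w) \<partial>lborel) = (\<integral>\<^sup>+y. ennreal (lam * q w) * ennreal (q (y - (t+1) *\<^sub>R w)) \<partial>lborel)"
        unfolding X_def using lam q0 by (intro nn_integral_cong) (simp add: ennreal_mult)
      also have "\<dots> \<le> ennreal (lam * q w) * (\<integral>\<^sup>+y. ennreal (q (y - (t+1) *\<^sub>R w)) \<partial>lborel)"
        by (rule nn_integral_cmult_le) simp
      also have "\<dots> \<le> ennreal (lam * q w) * ennreal (pi^3)"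
        by (intro mult_left_mono) (auto simp: q_def J_translate)
      also have "\<dots> = ennreal (pi^3) * ennreal lam * ennreal (q w)"
        using lam q0 by (simp add: ennreal_mult mult_ac)
      finally show "(\<integral>\<^sup>+y. ennreal (X y w) \<partial>lborel) \<le> ennreal (pi^3) * ennreal lam * ennreal (q w)" .
    qed
    also have "\<dots> \<le> ennreal (pi^3) * ennreal lam * (\<integral>\<^sup>+w. ennreal (q w) \<partial>lborel)"
      by (rule nn_integral_cmult_le) (simp add: ennreal_mult_eq_top_iff)
    also have "\<dots> \<le> ennreal (pi^3) * ennreal lam * ennreal (pi^3)"
      using J_translate[of 0] by (intro mult_left_mono) (auto simp: q_def)
    finally show "(\<integral>\<^sup>+w. \<integral>\<^sup>+y. ennreal (X y w) \<partial>lborel \<partial>lborel) \<le> ennreal lam * ennreal (pi^3) * ennreal (pi^3)"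
      by (simp add: mult_ac)
  next
    have "(\<integral>\<^sup>+w. \<integral>\<^sup>+y. ennreal (Y y w) \<partial>lborel \<partial>lborel) = (\<integral>\<^sup>+y. \<integral>\<^sup>+w. ennreal (Y y w) \<partial>lborel \<partial>lborel)"
      by (rule lborel_pair.Fubini'[OF mY'])
    also have "\<dots> \<le> (\<integral>\<^sup>+y. ennreal (1/lam) * (\<integral>\<^sup>+w. ennreal ((japan w powr nu * japan (y - (t+1) *\<^sub>R w) powr om * (c w * p y w))^2) \<partial>lborel) \<partial>lborel)"
    proof (intro nn_integral_mono)
      fix y :: "real^3"
      have "(\<integral>\<^sup>+w. ennreal (Y y w) \<partial>lborel) \<le> (\<integral>\<^sup>+w. ennreal (1/lam) * ennreal ((japan w powr nu * japan (y - (t+1) *\<^sub>R w) powr om * (c w * p y w))^2) \<partial>lborel)"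
      proof (intro nn_integral_mono)
        fix w :: "real^3"
        let ?a = "japan w" and ?b = "japan (y - (t+1) *\<^sub>R w)"
        have "\<bar>?a ^ 4 * ?b ^ 5 * p y w\<bar> \<le> \<bar>?a powr nu * ?b powr om * (c w * p y w)\<bar>"
        proof -
          have "?a ^ 4 \<le> ?a powr nu" using nu by (intro japan_pow_le_powr) simp
          moreover have "?b ^ 5 \<le> ?b powr om" using om by (intro japan_pow_le_powr) simp
          moreover have "\<bar>p y w\<bar> \<le> \<bar>c w * p y w\<bar>" using c1[of w]
            by (simp add: abs_mult mult_le_cancel_right1)
          ultimately show ?thesis
            using japan_pos[of w] japan_pos[of "y - (t+1) *\<^sub>R w"]
            by (simp add: abs_mult mult_mono)
        qed
        then have "(?a ^ 4 * ?b ^ 5 * p y w)^2 \<le> (?a powr nu * ?b powr om * (c w * p y w))^2"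
          by (simp add: abs_le_square_iff)
        then have "Y y w \<le> (1/lam) * (?a powr nu * ?b powr om * (c w * p y w))^2"
          unfolding Y_def using lam by (intro mult_left_mono) auto
        then show "ennreal (Y y w) \<le> ennreal (1/lam) * ennreal ((?a powr nu * ?b powr om * (c w * p y w))^2)"
          using lam by (simp add: ennreal_mult[symmetric] ennreal_leI del: ennreal_mult)
      qed
      also have "\<dots> \<le> ennreal (1/lam) * (\<integral>\<^sup>+w. ennreal ((japan w powr nu * japan (y - (t+1) *\<^sub>R w) powr om * (c w * p y w))^2) \<partial>lborel)"
        by (rule nn_integral_cmult_le) simp
      finally show "(\<integral>\<^sup>+w. ennreal (Y y w) \<partial>lborel) \<le> \<dots>" .
    qed
    also have "\<dots> \<le> ennreal (1/lam) * (\<integral>\<^sup>+y. \<integral>\<^sup>+w. ennreal ((japan w powr nu * japan (y - (t+1) *\<^sub>R w) powr om * (c w * p y w))^2) \<partial>lborel \<partial>lborel)"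
      by (rule nn_integral_cmult_le) simp
    also have "\<dots> \<le> ennreal (1/lam) * E"
      using L by (rule mult_left_mono) simp
    finally show "(\<integral>\<^sup>+w. \<integral>\<^sup>+y. ennreal (Y y w) \<partial>lborel \<partial>lborel) \<le> ennreal (1/lam) * E" .
  qed
  finally show ?thesis .
qed

definition aw :: "(bool \<times> 3) list \<Rightarrow> mindex" where
  "aw ws = (\<lambda>l. length (filter (\<lambda>p. p = (False, l)) ws))"

lemma W3_explicit: "W3 = [[], [(False,3)], [(False,2)], [(False,2),(False,3)], [(False,1)], [(False,1),(False,3)], [(False,1),(False,2)], [(False,1),(False,2),(False,3)]]"
  by (simp add: W3_def W2_def W1_def W0_def)

lemma distinct_W3: "distinct W3"
  unfolding W3_explicit by simp

lemma card_W3: "card (set W3) = 8"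
  using distinct_card[OF distinct_W3] unfolding W3_explicit by simp

lemma aw_vals: "aw [] = (\<lambda>_. 0)" "aw ((False,l)#ws) = (aw ws)(l := Suc (aw ws l))"
  by (auto simp: aw_def fun_eq_iff)

lemma Dop_000: "Dop t (\<lambda>_. 0) (\<lambda>_. 0) (\<lambda>_. 0) h = h"
  by (simp add: Dop_def)

lemma Dop_x: "Dop t a (\<lambda>_. 0) (\<lambda>_. 0) h = (dx 1 ^^ a 1) ((dx 2 ^^ a 2) ((dx 3 ^^ a 3) h))"
  by (simp add: Dop_def)

lemma aw0: "aw [] 1 = 0" "aw [] 2 = 0" "aw [] 3 = 0"
  by (simp_all add: aw_def)

lemma Dop_aw0: "Dop t (aw []) (\<lambda>_. 0) (\<lambda>_. 0) h = pdw [] h"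
  by (simp add: Dop_x aw0)

lemma aw1: "aw [(False,3)] 1 = 0" "aw [(False,3)] 2 = 0" "aw [(False,3)] 3 = 1"
  by (simp_all add: aw_def)

lemma Dop_aw1: "Dop t (aw [(False,3)]) (\<lambda>_. 0) (\<lambda>_. 0) h = pdw [(False,3)] h"
  by (simp add: Dop_x aw1)

lemma aw2: "aw [(False,2)] 1 = 0" "aw [(False,2)] 2 = 1" "aw [(False,2)] 3 = 0"
  by (simp_all add: aw_def)

lemma Dop_aw2: "Dop t (aw [(False,2)]) (\<lambda>_. 0) (\<lambda>_. 0) h = pdw [(False,2)] h"
  by (simp add: Dop_x aw2)

lemma aw3: "aw [(False,2),(False,3)] 1 = 0" "aw [(False,2),(False,3)] 2 = 1" "aw [(False,2),(False,3)] 3 = 1"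
  by (simp_all add: aw_def)

lemma Dop_aw3: "Dop t (aw [(False,2),(False,3)]) (\<lambda>_. 0) (\<lambda>_. 0) h = pdw [(False,2),(False,3)] h"
  by (simp add: Dop_x aw3)

lemma aw4: "aw [(False,1)] 1 = 1" "aw [(False,1)] 2 = 0" "aw [(False,1)] 3 = 0"
  by (simp_all add: aw_def)

lemma Dop_aw4: "Dop t (aw [(False,1)]) (\<lambda>_. 0) (\<lambda>_. 0) h = pdw [(False,1)] h"
  by (simp add: Dop_x aw4)

lemma aw5: "aw [(False,1),(False,3)] 1 = 1" "aw [(False,1),(False,3)] 2 = 0" "aw [(False,1),(False,3)] 3 = 1"
  by (simp_all add: aw_def)

lemma Dop_aw5: "Dop t (aw [(False,1),(False,3)]) (\<lambda>_. 0) (\<lambda>_. 0) h = pdw [(False,1),(False,3)] h"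
  by (simp add: Dop_x aw5)

lemma aw6: "aw [(False,1),(False,2)] 1 = 1" "aw [(False,1),(False,2)] 2 = 1" "aw [(False,1),(False,2)] 3 = 0"
  by (simp_all add: aw_def)

lemma Dop_aw6: "Dop t (aw [(False,1),(False,2)]) (\<lambda>_. 0) (\<lambda>_. 0) h = pdw [(False,1),(False,2)] h"
  by (simp add: Dop_x aw6)

lemma aw7: "aw [(False,1),(False,2),(False,3)] 1 = 1" "aw [(False,1),(False,2),(False,3)] 2 = 1" "aw [(False,1),(False,2),(False,3)] 3 = 1"
  by (simp_all add: aw_def)

lemma Dop_aw7: "Dop t (aw [(False,1),(False,2),(False,3)]) (\<lambda>_. 0) (\<lambda>_. 0) h = pdw [(False,1),(False,2),(False,3)] h"
  by (simp add: Dop_x aw7)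

lemma W3_cases:
  assumes "ws \<in> set W3"
  shows "ws = [] \<or> ws = [(False,3)] \<or> ws = [(False,2)] \<or> ws = [(False,2),(False,3)] \<or> ws = [(False,1)] \<or>
        ws = [(False,1),(False,3)] \<or> ws = [(False,1),(False,2)] \<or> ws = [(False,1),(False,2),(False,3)]"
  using assms unfolding W3_explicit by simp

lemma Dop_aw:
  assumes "ws \<in> set W3"
  shows "Dop t (aw ws) (\<lambda>_. 0) (\<lambda>_. 0) h = pdw ws h"
  using W3_cases[OF assms] by (elim disjE) (simp_all only: Dop_aw0 Dop_aw1 Dop_aw2 Dop_aw3 Dop_aw4 Dop_aw5 Dop_aw6 Dop_aw7)

lemma mlen_aw:
  assumes "ws \<in> set W3"
  shows "mlen (aw ws) \<le> 3"
proof -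
  have m: "mlen a = a 1 + a 2 + a 3" for a :: mindex
    by (simp only: mlen_def sum_3)
  show ?thesis unfolding m using W3_cases[OF assms]
    by (elim disjE) (simp_all add: aw0 aw1 aw2 aw3 aw4 aw5 aw6 aw7)
qed

lemma W3_xonly: "ws \<in> set W3 \<Longrightarrow> p \<in> set ws \<Longrightarrow> \<not> fst p"
  unfolding W3_explicit by auto

lemma dx_cmult:
  assumes "\<And>x v. ((\<lambda>s. h (x + s *\<^sub>R axis l 1) v) has_real_derivative dx l h x v) (at 0)"
  shows "dx l (\<lambda>x v. c v * h x v) = (\<lambda>x v. c v * dx l h x v)"
proof (intro ext)
  fix x v
  have "((\<lambda>s. c v * h (x + s *\<^sub>R axis l 1) v) has_real_derivative c v * dx l h x v) (at 0)"
    by (intro DERIV_cmult assms)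
  then show "dx l (\<lambda>x v. c v * h x v) x v = c v * dx l h x v"
    unfolding dx_def[of l "\<lambda>x v. c v * h x v"] by (rule DERIV_imp_deriv)
qed

lemma pdw_cmult:
  assumes der: "\<And>ws x v l. ((\<lambda>s. pdw ws F (x + s *\<^sub>R axis l 1) v) has_real_derivative dx l (pdw ws F) x v) (at 0)"
  shows "(\<forall>p\<in>set ws. \<not> fst p) \<Longrightarrow> pdw ws (\<lambda>x v. c v * F x v) = (\<lambda>x v. c v * pdw ws F x v)"
proof (induction ws)
  case Nil then show ?case by simp
next
  case (Cons p ws)
  obtain b l where p: "p = (b, l)" by (cases p)
  with Cons.prems have b: "\<not> b" by auto
  have "pdw (p # ws) (\<lambda>x v. c v * F x v) = dx l (\<lambda>x v. c v * pdw ws F x v)"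
    using Cons by (simp add: p b)
  also have "\<dots> = (\<lambda>x v. c v * dx l (pdw ws F) x v)" by (rule dx_cmult[OF der])
  finally show ?case by (simp add: p b)
qed

lemma rho_shift:
  fixes x c :: "real^3"
  assumes s: "s \<in> {0..1}"
  shows "(japan (x - c))^2 \<le> 4 * (japan (x + s *\<^sub>R axis l 1 - c))^2"
proof -
  let ?a = "x - c" and ?b = "x + s *\<^sub>R axis l 1 - c"
  have "norm ?a \<le> norm ?b + norm (s *\<^sub>R axis l (1::real))"
    using norm_triangle_ineq4[of ?b "s *\<^sub>R axis l 1"] by (simp add: algebra_simps)
  also have "norm (s *\<^sub>R axis l (1::real)) \<le> 1" using s by simp
  finally have "norm ?a \<le> norm ?b + 1" by simp
  then have "(norm ?a)^2 \<le> (norm ?b + 1)^2" by (intro power_mono) auto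
  also have "\<dots> \<le> 2 * (norm ?b)^2 + 2" using sum_squares_bound[of "norm ?b" 1]
    by (simp add: power2_eq_square algebra_simps)
  finally have "(norm ?a)^2 \<le> 2 * (norm ?b)^2 + 2" .
  moreover have "0 \<le> (norm ?b)^2" by simp
  ultimately show ?thesis unfolding japan_sq distrib_left by linarith
qed

lemma cont_slice:
  assumes "continuous_on UNIV (\<lambda>z::(real^3)\<times>(real^3). G (fst z) (snd z))"
  shows "continuous_on UNIV (\<lambda>y. G y w)" "continuous_on UNIV (\<lambda>w. G y w)"
proof -
  have "continuous_on UNIV ((\<lambda>z. G (fst z) (snd z)) \<circ> (\<lambda>y. (y, w)))"
    by (rule continuous_on_compose[OF _ continuous_on_subset[OF assms]]) (auto intro!: continuous_intros)
  then show "continuous_on UNIV (\<lambda>y. G y w)" by (simp add: comp_def)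
  have "continuous_on UNIV ((\<lambda>z. G (fst z) (snd z)) \<circ> (\<lambda>w. (y, w)))"
    by (rule continuous_on_compose[OF _ continuous_on_subset[OF assms]]) (auto intro!: continuous_intros)
  then show "continuous_on UNIV (\<lambda>w. G y w)" by (simp add: comp_def)
qed

lemma mlen0: "mlen (\<lambda>_. 0) = 0"
  by (simp add: mlen_def)

lemma nu_aw: "ws \<in> set W3 \<Longrightarrow> 4 \<le> nu (aw ws) (\<lambda>_. 0) (\<lambda>_. 0)"
  using mlen_aw[of ws] unfolding nu_def mlen0 by simp

lemma omega_aw: "ws \<in> set W3 \<Longrightarrow> 5 \<le> omega (aw ws) (\<lambda>_. 0) (\<lambda>_. 0)"
  using mlen_aw[of ws] unfolding omega_def mlen0 by simp

lemma A_bound: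
  fixes F :: "real^3 \<Rightarrow> real^3 \<Rightarrow> real" and c :: "real^3 \<Rightarrow> real" and t lam :: real and E :: ennreal and x :: "real^3"
  assumes der: "\<And>ws x v l. ((\<lambda>s. pdw ws F (x + s *\<^sub>R axis l 1) v) has_real_derivative dx l (pdw ws F) x v) (at 0)"
  and cont: "\<And>ws. continuous_on UNIV (\<lambda>z::(real^3)\<times>(real^3). pdw ws F (fst z) (snd z))"
  and c1: "\<And>w. 1 \<le> c w" and lam: "0 < lam"
  and L: "\<And>ws. ws \<in> set W3 \<Longrightarrow> (\<integral>\<^sup>+y. \<integral>\<^sup>+w. ennreal ((japan w powr nu (aw ws) (\<lambda>_. 0) (\<lambda>_. 0)
      * japan (y - (t+1) *\<^sub>R w) powr omega (aw ws) (\<lambda>_. 0) (\<lambda>_. 0) * (c w * pdw ws F y w))^2) \<partial>lborel \<partial>lborel) \<le> E"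
  shows "(\<integral>\<^sup>+w. ennreal (japan w * (japan (x - (t+1) *\<^sub>R w))^2 * \<bar>F x w\<bar>) \<partial>lborel)
     \<le> 512 * (ennreal lam * ennreal (pi^3) * ennreal (pi^3) + ennreal (1/lam) * E)"
proof -
  define T where "T = (\<lambda>ws y w. ennreal (japan w * (japan (y - (t+1) *\<^sub>R w))^2 * \<bar>pdw ws F y w\<bar>))"
  have cT: "continuous_on UNIV (\<lambda>z::(real^3)\<times>(real^3). japan (snd z) * (japan (fst z - (t+1) *\<^sub>R snd z))^2 * \<bar>pdw ws F (fst z) (snd z)\<bar>)" for ws
    by (intro continuous_intros cont)
  have cTsw: "continuous_on UNIV (\<lambda>z::(real^3)\<times>(real^3). japan (fst z) * (japan (snd z - (t+1) *\<^sub>R fst z))^2 * \<bar>pdw ws F (snd z) (fst z)\<bar>)" for ws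
  proof -
    have "continuous_on UNIV ((\<lambda>z::(real^3)\<times>(real^3). japan (snd z) * (japan (fst z - (t+1) *\<^sub>R snd z))^2 * \<bar>pdw ws F (fst z) (snd z)\<bar>) \<circ> (\<lambda>z. (snd z, fst z)))"
      by (rule continuous_on_compose[OF _ continuous_on_subset[OF cT]]) (auto intro!: continuous_intros)
    then show ?thesis by (simp add: comp_def)
  qed
  have mTy: "(\<lambda>y. T ws y w) \<in> borel_measurable lborel" for ws w
    unfolding T_def by (rule meas_single) (rule cont_slice(1)[OF cT])
  have mTw: "(\<lambda>w. \<integral>\<^sup>+y. T ws y w \<partial>lborel) \<in> borel_measurable lborel" for ws
  proof -
    have "(\<lambda>(w, y). T ws y w) \<in> borel_measurable (lborel \<Otimes>\<^sub>M lborel)"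
      using meas_pair[OF cTsw[of ws]] by (simp add: T_def case_prod_beta)
    then show ?thesis by (rule lborel.borel_measurable_nn_integral)
  qed
  have pt: "ennreal (japan w * (japan (x - (t+1) *\<^sub>R w))^2 * \<bar>F x w\<bar>) \<le> 64 * (\<Sum>ws\<in>set W3. \<integral>\<^sup>+y. T ws y w \<partial>lborel)" for w
  proof -
    let ?\<rho> = "\<lambda>y. (japan (y - (t+1) *\<^sub>R w))^2"
    let ?P = "\<lambda>ws y. pdw ws F y w"
    have S: "ennreal (?\<rho> x * \<bar>?P [] x\<bar>) \<le> 64 * (\<integral>\<^sup>+y. ennreal (\<Sum>ws\<leftarrow>W3. ?\<rho> y * \<bar>?P ws y\<bar>) \<partial>lborel)"
    proof (rule sob3)
      show "((\<lambda>s. ?P ws (z + s *\<^sub>R axis l 1)) has_real_derivative ?P ((False, l) # ws) z) (at 0)" for l ws z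
        by (simp add: der)
      show "continuous_on UNIV (?P ws)" for ws by (rule cont_slice(1)[OF cont])
      show "continuous_on UNIV ?\<rho>" by (intro continuous_intros)
      show "?\<rho> z \<le> 4 * ?\<rho> (z + s *\<^sub>R axis l 1)" if "s \<in> {0..1}" for l z s
        using rho_shift[OF that, of z "(t+1) *\<^sub>R w" l] by simp
      show "0 \<le> ?\<rho> z" for z by simp
    qed
    have jw: "0 \<le> japan w" using japan_pos[of w] by simp
    have "ennreal (japan w * (japan (x - (t+1) *\<^sub>R w))^2 * \<bar>F x w\<bar>) = ennreal (japan w) * ennreal (?\<rho> x * \<bar>?P [] x\<bar>)"
      using jw by (simp add: ennreal_mult[symmetric] mult.assoc del: ennreal_mult)
    also have "\<dots> \<le> ennreal (japan w) * (64 * (\<integral>\<^sup>+y. ennreal (\<Sum>ws\<leftarrow>W3. ?\<rho> y * \<bar>?P ws y\<bar>) \<partial>lborel))"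
      by (rule mult_left_mono[OF S]) simp
    also have "\<dots> = 64 * (\<integral>\<^sup>+y. ennreal (japan w) * ennreal (\<Sum>ws\<leftarrow>W3. ?\<rho> y * \<bar>?P ws y\<bar>) \<partial>lborel)"
    proof -
      have m: "(\<lambda>y. ennreal (\<Sum>ws\<leftarrow>W3. ?\<rho> y * \<bar>?P ws y\<bar>)) \<in> borel_measurable lborel"
        by (rule meas_single) (intro cont_sumlist cont_slice(1)[OF cont] continuous_intros)
      show ?thesis using nn_integral_cmult[OF m, of "ennreal (japan w)"] by (simp add: mult_ac)
    qed
    also have "(\<lambda>y. ennreal (japan w) * ennreal (\<Sum>ws\<leftarrow>W3. ?\<rho> y * \<bar>?P ws y\<bar>)) = (\<lambda>y. \<Sum>ws\<in>set W3. T ws y w)"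
    proof
      fix y
      have "ennreal (japan w) * ennreal (\<Sum>ws\<leftarrow>W3. ?\<rho> y * \<bar>?P ws y\<bar>) = ennreal (japan w * (\<Sum>ws\<in>set W3. ?\<rho> y * \<bar>?P ws y\<bar>))"
        using jw by (simp add: ennreal_mult sum_list_distinct_conv_sum_set[OF distinct_W3] sum_nonneg)
      also have "\<dots> = ennreal (\<Sum>ws\<in>set W3. japan w * (?\<rho> y * \<bar>?P ws y\<bar>))" by (simp add: sum_distrib_left)
      also have "\<dots> = (\<Sum>ws\<in>set W3. T ws y w)" unfolding T_def using jw
        by (subst sum_ennreal[symmetric]) (auto simp: mult.assoc)
      finally show "ennreal (japan w) * ennreal (\<Sum>ws\<leftarrow>W3. ?\<rho> y * \<bar>?P ws y\<bar>) = (\<Sum>ws\<in>set W3. T ws y w)" .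
    qed
    also have "(\<integral>\<^sup>+y. (\<Sum>ws\<in>set W3. T ws y w) \<partial>lborel) = (\<Sum>ws\<in>set W3. \<integral>\<^sup>+y. T ws y w \<partial>lborel)"
      by (rule nn_integral_sum) (rule mTy)
    finally show ?thesis .
  qed
  have "(\<integral>\<^sup>+w. ennreal (japan w * (japan (x - (t+1) *\<^sub>R w))^2 * \<bar>F x w\<bar>) \<partial>lborel)
      \<le> (\<integral>\<^sup>+w. 64 * (\<Sum>ws\<in>set W3. \<integral>\<^sup>+y. T ws y w \<partial>lborel) \<partial>lborel)"
    by (intro nn_integral_mono pt)
  also have "\<dots> \<le> 64 * (\<integral>\<^sup>+w. (\<Sum>ws\<in>set W3. \<integral>\<^sup>+y. T ws y w \<partial>lborel) \<partial>lborel)"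
    by (rule nn_integral_cmult_le) simp
  also have "64 * (\<integral>\<^sup>+w. (\<Sum>ws\<in>set W3. \<integral>\<^sup>+y. T ws y w \<partial>lborel) \<partial>lborel) = 64 * (\<Sum>ws\<in>set W3. \<integral>\<^sup>+w. \<integral>\<^sup>+y. T ws y w \<partial>lborel \<partial>lborel)"
    by (subst nn_integral_sum) (auto intro: mTw[unfolded measurable_lborel2])
  also have "\<dots> \<le> 64 * (\<Sum>ws\<in>set W3. ennreal lam * ennreal (pi^3) * ennreal (pi^3) + ennreal (1/lam) * E)"
  proof (intro mult_left_mono sum_mono)
    fix ws assume ws: "ws \<in> set W3"
    show "(\<integral>\<^sup>+w. \<integral>\<^sup>+y. T ws y w \<partial>lborel \<partial>lborel) \<le> ennreal lam * ennreal (pi^3) * ennreal (pi^3) + ennreal (1/lam) * E"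
      unfolding T_def
      by (rule term_bound[OF cont c1 nu_aw[OF ws] omega_aw[OF ws] lam L[OF ws]])
  qed simp
  also have "\<dots> = 64 * (8 * (ennreal lam * ennreal (pi^3) * ennreal (pi^3) + ennreal (1/lam) * E))"
    by (simp add: card_W3)
  finally have F: "(\<integral>\<^sup>+w. ennreal (japan w * (japan (x - (t+1) *\<^sub>R w))^2 * \<bar>F x w\<bar>) \<partial>lborel)
     \<le> 64 * (8 * (ennreal lam * ennreal (pi^3) * ennreal (pi^3) + ennreal (1/lam) * E))" .
  have eq: "(64::ennreal) * (8 * (ennreal lam * ennreal (pi^3) * ennreal (pi^3) + ennreal (1/lam) * E))
     = 512 * (ennreal lam * ennreal (pi^3) * ennreal (pi^3) + ennreal (1/lam) * E)"
    by (simp only: mult.assoc[symmetric]) simp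
  show ?thesis using F unfolding eq .
qed

lemma finite_MI: "finite MI"
proof -
  let ?F = "{a :: mindex. \<forall>l. a l \<le> 10}"
  have fF: "finite ?F"
  proof -
    have "?F = Pi\<^sub>E UNIV (\<lambda>_. {..10})" by (auto simp: PiE_UNIV_domain)
    then show ?thesis by (simp add: finite_PiE)
  qed
  have le: "a l \<le> mlen a" for a :: mindex and l
    unfolding mlen_def by (rule member_le_sum) auto
  have "MI \<subseteq> ?F \<times> ?F \<times> ?F"
  proof
    fix z assume z: "z \<in> MI"
    obtain a b s where zz: "z = (a, b, s)" by (cases z) auto
    have m: "mlen a + mlen b + mlen s \<le> 10" using z unfolding zz MI_def by simp
    have "a l \<le> 10" "b l \<le> 10" "s l \<le> 10" for l
      using le[of a l] le[of b l] le[of s l] m by linarith+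
    then show "z \<in> ?F \<times> ?F \<times> ?F" unfolding zz by simp
  qed
  moreover have "finite (?F \<times> ?F \<times> ?F)" using fF by (intro finite_cartesian_product)
  ultimately show ?thesis by (rule finite_subset)
qed

lemma MI_sum_le:
  fixes F :: "mindex \<Rightarrow> mindex \<Rightarrow> mindex \<Rightarrow> ennreal"
  assumes "(a, b, s) \<in> MI"
  shows "F a b s \<le> (\<Sum>(\<alpha>, \<beta>, \<sigma>)\<in>MI. F \<alpha> \<beta> \<sigma>)"
  using member_le_sum[OF assms _ finite_MI, of "\<lambda>(\<alpha>, \<beta>, \<sigma>). F \<alpha> \<beta> \<sigma>"] by simp

lemma const_calc:
  assumes "0 < (\<epsilon>::real)"
  shows "512 * (ennreal (\<epsilon> powr (3/4)) * ennreal (pi^3) * ennreal (pi^3) + ennreal (1 / \<epsilon> powr (3/4)) * ennreal (\<epsilon> powr (3/2)))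
    = ennreal (512 * (pi^3 * pi^3 + 1) * \<epsilon> powr (3/4))"
proof -
  have e: "1 / \<epsilon> powr (3/4) * \<epsilon> powr (3/2) = \<epsilon> powr (3/4)"
  proof -
    have "\<epsilon> powr (3/2) = \<epsilon> powr (3/4) * \<epsilon> powr (3/4)" using assms by (simp add: powr_add[symmetric])
    then show ?thesis using assms by simp
  qed
  have m1: "ennreal (\<epsilon> powr (3/4) * pi^3 * pi^3) = ennreal (\<epsilon> powr (3/4)) * ennreal (pi^3) * ennreal (pi^3)"
    by (simp add: ennreal_mult)
  have m2: "ennreal (1 / \<epsilon> powr (3/4) * \<epsilon> powr (3/2)) = ennreal (1 / \<epsilon> powr (3/4)) * ennreal (\<epsilon> powr (3/2))"
    by (rule ennreal_mult) auto
  have m3: "ennreal (\<epsilon> powr (3/4) * pi^3 * pi^3 + 1 / \<epsilon> powr (3/4) * \<epsilon> powr (3/2))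
      = ennreal (\<epsilon> powr (3/4) * pi^3 * pi^3) + ennreal (1 / \<epsilon> powr (3/4) * \<epsilon> powr (3/2))"
    by (rule ennreal_plus) auto
  have m4: "\<epsilon> powr (3/4) * pi^3 * pi^3 + 1 / \<epsilon> powr (3/4) * \<epsilon> powr (3/2) = (pi^3 * pi^3 + 1) * \<epsilon> powr (3/4)"
    unfolding e by (simp add: algebra_simps)
  have m5: "ennreal (512 * ((pi^3 * pi^3 + 1) * \<epsilon> powr (3/4))) = 512 * ennreal ((pi^3 * pi^3 + 1) * \<epsilon> powr (3/4))"
    by (subst ennreal_mult) auto
  have "512 * (ennreal (\<epsilon> powr (3/4)) * ennreal (pi^3) * ennreal (pi^3) + ennreal (1 / \<epsilon> powr (3/4)) * ennreal (\<epsilon> powr (3/2)))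
      = 512 * (ennreal (\<epsilon> powr (3/4) * pi^3 * pi^3) + ennreal (1 / \<epsilon> powr (3/4) * \<epsilon> powr (3/2)))"
    by (simp only: m1 m2)
  also have "\<dots> = 512 * ennreal ((pi^3 * pi^3 + 1) * \<epsilon> powr (3/4))"
    by (simp only: m3[symmetric] m4)
  also have "\<dots> = ennreal (512 * ((pi^3 * pi^3 + 1) * \<epsilon> powr (3/4)))"
    by (simp only: m5)
  also have "\<dots> = ennreal (512 * (pi^3 * pi^3 + 1) * \<epsilon> powr (3/4))"
    by (simp only: mult.assoc)
  finally show ?thesis .
qed

lemma pointwise_integrand:
  fixes x v :: "real^3" and t nu om D M :: real
  assumes t: "0 \<le> t" and g: "0 \<le> \<gamma>" "\<gamma> \<le> 1" and M0: "0 \<le> M"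
  and A: "(\<integral>\<^sup>+w. ennreal (japan w * (japan (x - (t+1) *\<^sub>R w))^2 * \<bar>f t x w\<bar>) \<partial>lborel) \<le> ennreal M"
  shows "ennreal \<bar>(1 + t)^2 * japan v powr (2 * nu) * japan (x - (t + 1) *\<^sub>R v) powr (2 * om - 2) * abar \<gamma> f i j t x v * D^2\<bar>
     \<le> ennreal (8 * M) * ennreal ((japan v powr (1/2) * (japan v powr nu * japan (x - (t + 1) *\<^sub>R v) powr om) * D)^2)"
proof -
  define a where "a = japan v"
  define b where "b = japan (x - (t + 1) *\<^sub>R v)"
  define ab where "ab = abar \<gamma> f i j t x v"
  define c where "c = (1 + t)^2"
  have a0: "0 < a" and b0: "0 < b" unfolding a_def b_def by (rule japan_pos)+
  have c0: "0 < c" unfolding c_def using t by simp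
  define P where "P = c * a powr (2 * nu) * b powr (2 * om - 2) * D^2"
  define Kv where "Kv = 8 / c * a * b^2"
  have P0: "0 \<le> P" unfolding P_def using c0 by simp
  have Kv0: "0 \<le> Kv" unfolding Kv_def using a0 c0 by simp
  have abs_eq: "\<bar>c * a powr (2 * nu) * b powr (2 * om - 2) * ab * D^2\<bar> = P * \<bar>ab\<bar>"
  proof -
    have "\<bar>c * a powr (2 * nu) * b powr (2 * om - 2) * ab * D^2\<bar> = \<bar>c * a powr (2 * nu) * b powr (2 * om - 2) * D^2\<bar> * \<bar>ab\<bar>"
      by (simp only: abs_mult mult_ac)
    also have "\<bar>c * a powr (2 * nu) * b powr (2 * om - 2) * D^2\<bar> = P"
      unfolding P_def using P0[unfolded P_def] by (rule abs_of_nonneg)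
    finally show ?thesis .
  qed
  have "ennreal \<bar>ab\<bar> \<le> ennreal Kv * (\<integral>\<^sup>+w. ennreal (japan w * (japan (x - (t+1) *\<^sub>R w))^2 * \<bar>f t x w\<bar>) \<partial>lborel)"
    unfolding Kv_def ab_def a_def b_def c_def by (rule abar_bound[OF t g])
  also have "\<dots> \<le> ennreal Kv * ennreal M" by (rule mult_left_mono[OF A]) simp
  finally have abb: "ennreal \<bar>ab\<bar> \<le> ennreal Kv * ennreal M" .
  have key: "P * Kv = 8 * (a powr (1/2) * (a powr nu * b powr om) * D)^2"
  proof -
    have h1: "(a powr (1/2))^2 = a" using a0 by (simp add: power2_eq_square powr_add[symmetric])
    have sq: "(z powr e)^2 = z powr (2 * e)" for z e :: real
    proof -
      have "(z powr e)^2 = z powr e * z powr e" by (simp only: power2_eq_square)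
      also have "\<dots> = z powr (e + e)" by (simp only: powr_add)
      also have "e + e = 2 * e" by simp
      finally show ?thesis .
    qed
    have h2: "(a powr nu)^2 = a powr (2 * nu)" by (rule sq)
    have h3: "(b powr om)^2 = b powr (2 * om)" by (rule sq)
    have h4: "b powr (2 * om - 2) * b^2 = b powr (2 * om)"
    proof -
      have "b^2 = b powr 2" using b0 powr_realpow[of b 2] by simp
      then have "b powr (2 * om - 2) * b^2 = b powr (2 * om - 2) * b powr 2" by simp
      also have "\<dots> = b powr (2 * om - 2 + 2)" by (simp only: powr_add)
      also have "2 * om - 2 + 2 = 2 * om" by simp
      finally show ?thesis .
    qed
    have cc: "c * (8 / c) = 8" using c0 by simp
    have "P * Kv = (c * (8 / c)) * a * a powr (2 * nu) * (b powr (2 * om - 2) * b^2) * D^2"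
      unfolding P_def Kv_def by (simp only: mult_ac times_divide_eq_right)
    also have "\<dots> = 8 * (a powr (1/2))^2 * (a powr nu)^2 * (b powr om)^2 * D^2"
      unfolding cc h1 h2 h3 h4 by (simp only: mult_ac)
    also have "\<dots> = 8 * (a powr (1/2) * (a powr nu * b powr om) * D)^2"
      by (simp only: power_mult_distrib mult_ac)
    finally show ?thesis .
  qed
  have "ennreal \<bar>c * a powr (2 * nu) * b powr (2 * om - 2) * ab * D^2\<bar> = ennreal P * ennreal \<bar>ab\<bar>"
    unfolding abs_eq using P0 by (rule ennreal_mult) simp
  also have "\<dots> \<le> ennreal P * (ennreal Kv * ennreal M)" by (rule mult_left_mono[OF abb]) simp
  also have "\<dots> = ennreal (P * Kv * M)" using P0 Kv0 M0 by (simp add: ennreal_mult mult.assoc)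
  also have "P * Kv * M = (8 * M) * (a powr (1/2) * (a powr nu * b powr om) * D)^2"
    unfolding key by (simp only: mult_ac)
  also have "ennreal \<dots> = ennreal (8 * M) * ennreal ((a powr (1/2) * (a powr nu * b powr om) * D)^2)"
    using M0 by (intro ennreal_mult) auto
  finally show ?thesis unfolding a_def b_def ab_def c_def .
qed

theorem proposition7p16:
  fixes \<gamma> d0 :: real
  assumes "0 \<le> \<gamma>" "\<gamma> < 1" "0 < d0"
  shows "\<exists>\<epsilon>0 > 0. \<exists>C. \<forall>\<delta> \<epsilon> f_ini Tb (f :: real \<Rightarrow> real^3 \<Rightarrow> real^3 \<Rightarrow> real) \<alpha> \<beta> \<sigma> i j T.
    0 < \<delta> \<longrightarrow> \<delta> < 1/8 \<longrightarrow> 0 \<le> \<epsilon> \<longrightarrow> \<epsilon> \<le> \<epsilon>0 \<longrightarrow>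
    (\<Sum>(\<alpha>', \<beta>', \<sigma>')\<in>MI.
        L2sq (\<lambda>x v. Wt 0 \<alpha>' \<beta>' \<sigma>' x v *
           Dop 0 \<alpha>' \<beta>' \<sigma>' (\<lambda>x' v'. exp (2 * d0 * japan v') * f_ini x' v') x v)) < ennreal \<epsilon> \<longrightarrow>
    0 < Tb \<longrightarrow>
    regular_sol Tb f \<longrightarrow> landau_sol \<gamma> Tb f \<longrightarrow>
    (\<forall>t\<in>{0..<Tb}. \<forall>x v. 0 \<le> f t x v) \<longrightarrow> f 0 = f_ini \<longrightarrow>
    (\<forall>T'\<in>{0..<Tb}. ET_sq \<delta> T' (\<lambda>t x v. exp (dfun d0 \<delta> t * japan v) * f t x v) \<le> ennreal (\<epsilon> powr (3/2))) \<longrightarrow>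
    mlen \<alpha> + mlen \<beta> + mlen \<sigma> \<le> 10 \<longrightarrow>
    T \<in> {0..<Tb} \<longrightarrow>
    (\<integral>\<^sup>+ t\<in>{0..T}. (\<integral>\<^sup>+ x. (\<integral>\<^sup>+ v. ennreal \<bar>(1 + t)^2 * japan v powr (2 * nu \<alpha> \<beta> \<sigma>)
         * japan (x - (t + 1) *\<^sub>R v) powr (2 * omega \<alpha> \<beta> \<sigma> - 2) * abar \<gamma> f i j t x v
         * (Dop t \<alpha> \<beta> \<sigma> (\<lambda>x' v'. exp (dfun d0 \<delta> t * japan v') * f t x' v') x v)^2\<bar> \<partial>lborel) \<partial>lborel) \<partial>lborel)
    \<le> ennreal (C * \<epsilon>^2 * (1 + T) powr (2 * real (mlen \<beta>) * (1 + \<delta>)))"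
proof -
  define K0 :: real where "K0 = 4096 * (pi^3 * pi^3 + 1)"
  show ?thesis
    apply (rule exI[where x=1])
    apply (rule conjI)
     apply simp
    apply (rule exI[where x=K0])
    apply (intro allI impI)
    subgoal premises prems for \<delta> \<epsilon> f_ini Tb f \<alpha> \<beta> \<sigma> i j T
    proof -
      have eps0: "0 \<le> \<epsilon>" using prems(3) .
      have eps1: "\<epsilon> \<le> 1" using prems(4) .
      have reg: "regular_sol Tb f" using prems(7) .
      have T: "T \<in> {0..<Tb}" using prems(13) .
      have T0: "0 \<le> T" "T < Tb" using T by auto
      have epos: "0 < \<epsilon>"
      proof (rule ccontr)
        assume "\<not> 0 < \<epsilon>"
        then have "\<epsilon> = 0" using eps0 by simp
        then show False using prems(5) by simp
      qed
      define g where "g = (\<lambda>t x v. exp (dfun d0 \<delta> t * japan v) * f t x v)"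
      define E where "E = ennreal (\<epsilon> powr (3/2))"
      have ET: "ET_sq \<delta> T g \<le> E" using prems(11) T unfolding g_def E_def by blast
      have der: "\<And>t ws x v l. t \<in> {0..<Tb} \<Longrightarrow> ((\<lambda>s. pdw ws (f t) (x + s *\<^sub>R axis l 1) v) has_real_derivative dx l (pdw ws (f t)) x v) (at 0)"
        using reg unfolding regular_sol_def by blast
      have contR: "\<And>ws. continuous_on ({0..<Tb} \<times> UNIV \<times> UNIV) (\<lambda>(t, x, v). pdw ws (f t) x v)"
        using reg unfolding regular_sol_def by blast
      have contT: "continuous_on UNIV (\<lambda>z::(real^3)\<times>(real^3). pdw ws (f t) (fst z) (snd z))"
        if t: "t \<in> {0..<Tb}" for t ws
      proof -
        have "continuous_on UNIV ((\<lambda>(t, x, v). pdw ws (f t) x v) \<circ> (\<lambda>z::(real^3)\<times>(real^3). (t, fst z, snd z)))"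
          using t by (intro continuous_on_compose continuous_on_subset[OF contR]) (auto intro!: continuous_intros)
        then show ?thesis by (simp add: comp_def case_prod_beta)
      qed
      have dfun0: "0 \<le> dfun d0 \<delta> t" if "0 \<le> t" for t
        unfolding dfun_def using assms(3) by (intro mult_nonneg_nonneg add_nonneg_nonneg) auto
      have termle: "ennreal ((1 + T) powr (- real (mlen b) * (1 + \<delta>))) *
          (esssup (restrict_space lborel {0..<T}) (\<lambda>t. L2sq (\<lambda>x v. Wt t a b s x v * Dop t a b s (g t) x v))
           + (\<integral>\<^sup>+ t\<in>{0..<T}. L2sq (\<lambda>x v. japan v powr (1/2) * Wt t a b s x v * Dop t a b s (g t) x v) \<partial>lborel)) \<le> E"
        if mem: "(a, b, s) \<in> MI" for a b s
      proof -
        have "ennreal ((1 + T) powr (- real (mlen b) * (1 + \<delta>))) *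
          (esssup (restrict_space lborel {0..<T}) (\<lambda>t. L2sq (\<lambda>x v. Wt t a b s x v * Dop t a b s (g t) x v))
           + (\<integral>\<^sup>+ t\<in>{0..<T}. L2sq (\<lambda>x v. japan v powr (1/2) * Wt t a b s x v * Dop t a b s (g t) x v) \<partial>lborel)) \<le> ET_sq \<delta> T g"
          unfolding ET_sq_def
          by (rule MI_sum_le[OF mem, where F="\<lambda>a b s. ennreal ((1 + T) powr (- real (mlen b) * (1 + \<delta>))) *
          (esssup (restrict_space lborel {0..<T}) (\<lambda>t. L2sq (\<lambda>x v. Wt t a b s x v * Dop t a b s (g t) x v))
           + (\<integral>\<^sup>+ t\<in>{0..<T}. L2sq (\<lambda>x v. japan v powr (1/2) * Wt t a b s x v * Dop t a b s (g t) x v) \<partial>lborel))"])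
        then show ?thesis using ET by (rule order_trans)
      qed
      have goodAE: "AE t in lborel. t \<in> {0..<T} \<longrightarrow> (\<forall>ws\<in>set W3. L2sq (\<lambda>x v. Wt t (aw ws) (\<lambda>_. 0) (\<lambda>_. 0) x v * Dop t (aw ws) (\<lambda>_. 0) (\<lambda>_. 0) (g t) x v) \<le> E)"
      proof -
        have "AE t in lborel. \<forall>ws\<in>set W3. t \<in> {0..<T} \<longrightarrow> L2sq (\<lambda>x v. Wt t (aw ws) (\<lambda>_. 0) (\<lambda>_. 0) x v * Dop t (aw ws) (\<lambda>_. 0) (\<lambda>_. 0) (g t) x v) \<le> E"
        proof (rule AE_finite_allI)
          show "finite (set W3)" by simp
          fix ws assume ws: "ws \<in> set W3"
          have mem: "(aw ws, (\<lambda>_. 0), (\<lambda>_. 0)) \<in> MI" using mlen_aw[OF ws] by (simp add: MI_def mlen0)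
          have p1: "(1 + T) powr (- real (mlen (\<lambda>_::3. 0::nat)) * (1 + \<delta>)) = 1" using T0 by (simp add: mlen0)
          let ?Q = "\<lambda>t. L2sq (\<lambda>x v. Wt t (aw ws) (\<lambda>_. 0) (\<lambda>_. 0) x v * Dop t (aw ws) (\<lambda>_. 0) (\<lambda>_. 0) (g t) x v)"
          have "esssup (restrict_space lborel {0..<T}) ?Q + (\<integral>\<^sup>+ t\<in>{0..<T}. L2sq (\<lambda>x v. japan v powr (1/2) * Wt t (aw ws) (\<lambda>_. 0) (\<lambda>_. 0) x v * Dop t (aw ws) (\<lambda>_. 0) (\<lambda>_. 0) (g t) x v) \<partial>lborel) \<le> E"
            using termle[OF mem] unfolding p1 by simp
          then have es: "esssup (restrict_space lborel {0..<T}) ?Q \<le> E"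
            by (rule order_trans[rotated]) (auto intro: add_increasing2)
          have "AE t in restrict_space lborel {0..<T}. ?Q t \<le> esssup (restrict_space lborel {0..<T}) ?Q"
            by (rule esssup_AE)
          then have "AE t in lborel. t \<in> {0..<T} \<longrightarrow> ?Q t \<le> esssup (restrict_space lborel {0..<T}) ?Q"
            by (subst (asm) AE_restrict_space_iff) auto
          then show "AE t in lborel. t \<in> {0..<T} \<longrightarrow> ?Q t \<le> E"
            by (rule eventually_mono) (use es in auto)
        qed
        then show ?thesis by (rule eventually_mono) auto
      qed
      define Mc where "Mc = 512 * (pi^3 * pi^3 + 1) * \<epsilon> powr (3/4)"
      have Mc0: "0 \<le> Mc" unfolding Mc_def by simp
      have Abound: "(\<integral>\<^sup>+w. ennreal (japan w * (japan (x - (t+1) *\<^sub>R w))^2 * \<bar>f t x w\<bar>) \<partial>lborel) \<le> ennreal Mc"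
        if t: "t \<in> {0..<T}" and good: "\<forall>ws\<in>set W3. L2sq (\<lambda>x v. Wt t (aw ws) (\<lambda>_. 0) (\<lambda>_. 0) x v * Dop t (aw ws) (\<lambda>_. 0) (\<lambda>_. 0) (g t) x v) \<le> E"
        for t x
      proof -
        have tTb: "t \<in> {0..<Tb}" using t T0 by auto
        define c where "c = (\<lambda>v. exp (dfun d0 \<delta> t * japan v))"
        have c1: "1 \<le> c w" for w
          unfolding c_def using dfun0[of t] t japan_pos[of w] by simp
        have lam: "0 < \<epsilon> powr (3/4)" using epos by simp
        have L: "(\<integral>\<^sup>+y. \<integral>\<^sup>+w. ennreal ((japan w powr nu (aw ws) (\<lambda>_. 0) (\<lambda>_. 0)
             * japan (y - (t+1) *\<^sub>R w) powr omega (aw ws) (\<lambda>_. 0) (\<lambda>_. 0) * (c w * pdw ws (f t) y w))^2) \<partial>lborel \<partial>lborel) \<le> E"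
          if ws: "ws \<in> set W3" for ws
        proof -
          have D: "Dop t (aw ws) (\<lambda>_. 0) (\<lambda>_. 0) (g t) = (\<lambda>x v. c v * pdw ws (f t) x v)"
          proof -
            have gt: "g t = (\<lambda>x v. c v * f t x v)" unfolding g_def c_def by simp
            show ?thesis unfolding Dop_aw[OF ws] gt
              by (rule pdw_cmult[OF der[OF tTb]]) (use W3_xonly[OF ws] in blast)
          qed
          have "L2sq (\<lambda>x v. Wt t (aw ws) (\<lambda>_. 0) (\<lambda>_. 0) x v * Dop t (aw ws) (\<lambda>_. 0) (\<lambda>_. 0) (g t) x v) \<le> E"
            using good ws by blast
          then show ?thesis unfolding D L2sq_def Wt_def by simp
        qed
        have "(\<integral>\<^sup>+w. ennreal (japan w * (japan (x - (t+1) *\<^sub>R w))^2 * \<bar>f t x w\<bar>) \<partial>lborel)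
            \<le> 512 * (ennreal (\<epsilon> powr (3/4)) * ennreal (pi^3) * ennreal (pi^3) + ennreal (1 / \<epsilon> powr (3/4)) * E)"
          by (rule A_bound[OF der[OF tTb] contT[OF tTb] c1 lam L])
        also have "\<dots> = ennreal Mc" unfolding E_def Mc_def by (rule const_calc[OF epos])
        finally show ?thesis .
      qed
      define D where "D = (\<lambda>t x v. Dop t \<alpha> \<beta> \<sigma> (\<lambda>x' v'. exp (dfun d0 \<delta> t * japan v') * f t x' v') x v)"
      define I where "I = (\<lambda>t x v. ennreal \<bar>(1 + t)^2 * japan v powr (2 * nu \<alpha> \<beta> \<sigma>) * japan (x - (t + 1) *\<^sub>R v) powr (2 * omega \<alpha> \<beta> \<sigma> - 2)
         * abar \<gamma> f i j t x v * (D t x v)^2\<bar>)"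
      define L2 where "L2 = (\<lambda>t. L2sq (\<lambda>x v. japan v powr (1/2) * Wt t \<alpha> \<beta> \<sigma> x v * Dop t \<alpha> \<beta> \<sigma> (g t) x v))"
      have tbound: "(\<integral>\<^sup>+x. \<integral>\<^sup>+v. I t x v \<partial>lborel \<partial>lborel) \<le> ennreal (8 * Mc) * L2 t"
        if t: "t \<in> {0..<T}" and good: "\<forall>ws\<in>set W3. L2sq (\<lambda>x v. Wt t (aw ws) (\<lambda>_. 0) (\<lambda>_. 0) x v * Dop t (aw ws) (\<lambda>_. 0) (\<lambda>_. 0) (g t) x v) \<le> E"
        for t
      proof -
        have pt: "I t x v \<le> ennreal (8 * Mc) * ennreal ((japan v powr (1/2) * Wt t \<alpha> \<beta> \<sigma> x v * D t x v)^2)" for x v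
          unfolding I_def Wt_def
          by (rule pointwise_integrand) (use t assms(1,2) Mc0 Abound[OF t good] in auto)
        have "(\<integral>\<^sup>+x. \<integral>\<^sup>+v. I t x v \<partial>lborel \<partial>lborel)
            \<le> (\<integral>\<^sup>+x. \<integral>\<^sup>+v. ennreal (8 * Mc) * ennreal ((japan v powr (1/2) * Wt t \<alpha> \<beta> \<sigma> x v * D t x v)^2) \<partial>lborel \<partial>lborel)"
          by (intro nn_integral_mono pt)
        also have "\<dots> \<le> (\<integral>\<^sup>+x. ennreal (8 * Mc) * (\<integral>\<^sup>+v. ennreal ((japan v powr (1/2) * Wt t \<alpha> \<beta> \<sigma> x v * D t x v)^2) \<partial>lborel) \<partial>lborel)"
          by (intro nn_integral_mono nn_integral_cmult_le) simp
        also have "\<dots> \<le> ennreal (8 * Mc) * (\<integral>\<^sup>+x. \<integral>\<^sup>+v. ennreal ((japan v powr (1/2) * Wt t \<alpha> \<beta> \<sigma> x v * D t x v)^2) \<partial>lborel \<partial>lborel)"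
          by (rule nn_integral_cmult_le) simp
        also have "(\<integral>\<^sup>+x. \<integral>\<^sup>+v. ennreal ((japan v powr (1/2) * Wt t \<alpha> \<beta> \<sigma> x v * D t x v)^2) \<partial>lborel \<partial>lborel) = L2 t"
          unfolding L2_def L2sq_def D_def g_def by simp
        finally show ?thesis .
      qed
      have Ibound: "(\<integral>\<^sup>+t. L2 t * indicator {0..<T} t \<partial>lborel) \<le> ennreal ((1 + T) powr (real (mlen \<beta>) * (1 + \<delta>))) * E"
      proof -
        have mem: "(\<alpha>, \<beta>, \<sigma>) \<in> MI" using prems(12) by (simp add: MI_def)
        define p where "p = (1 + T) powr (- real (mlen \<beta>) * (1 + \<delta>))"
        have p0: "0 < p" unfolding p_def using T0 by simp
        have "ennreal p * (\<integral>\<^sup>+t. L2 t * indicator {0..<T} t \<partial>lborel) \<le> E"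
          using termle[OF mem, folded p_def]
          unfolding L2_def
          by (rule order_trans[rotated]) (intro mult_left_mono add_increasing, auto)
        then have "ennreal (1 / p) * (ennreal p * (\<integral>\<^sup>+t. L2 t * indicator {0..<T} t \<partial>lborel)) \<le> ennreal (1 / p) * E"
          by (rule mult_left_mono) simp
        moreover have "ennreal (1 / p) * ennreal p = 1"
          using p0 by (simp add: ennreal_mult[symmetric] del: ennreal_mult)
        moreover have "1 / p = (1 + T) powr (real (mlen \<beta>) * (1 + \<delta>))"
          unfolding p_def by (simp add: powr_minus divide_inverse)
        ultimately show ?thesis by (simp add: mult.assoc[symmetric])
      qed
      have "(\<integral>\<^sup>+ t\<in>{0..T}. (\<integral>\<^sup>+x. \<integral>\<^sup>+v. I t x v \<partial>lborel \<partial>lborel) \<partial>lborel)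
          \<le> (\<integral>\<^sup>+t. ennreal (8 * Mc) * (L2 t * indicator {0..<T} t) \<partial>lborel)"
      proof (rule nn_integral_mono_AE)
        show "AE t in lborel. (\<integral>\<^sup>+x. \<integral>\<^sup>+v. I t x v \<partial>lborel \<partial>lborel) * indicator {0..T} t \<le> ennreal (8 * Mc) * (L2 t * indicator {0..<T} t)"
          using goodAE AE_lborel_singleton[of T]
        proof eventually_elim
          case (elim t)
          show ?case
          proof (cases "t \<in> {0..<T}")
            case True
            then have "t \<in> {0..T}" by auto
            then show ?thesis using tbound[OF True] elim(1) True by simp
          next
            case False
            then have "t \<notin> {0..T}" using elim(2) by auto
            then show ?thesis by simp
          qed
        qed
      qed
      also have "\<dots> \<le> ennreal (8 * Mc) * (\<integral>\<^sup>+t. L2 t * indicator {0..<T} t \<partial>lborel)"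
        by (rule nn_integral_cmult_le) simp
      also have "\<dots> \<le> ennreal (8 * Mc) * (ennreal ((1 + T) powr (real (mlen \<beta>) * (1 + \<delta>))) * E)"
        by (rule mult_left_mono[OF Ibound]) simp
      also have "ennreal (8 * Mc) * (ennreal ((1 + T) powr (real (mlen \<beta>) * (1 + \<delta>))) * E)
          \<le> ennreal (K0 * \<epsilon>^2 * (1 + T) powr (2 * real (mlen \<beta>) * (1 + \<delta>)))"
      proof -
        define q where "q = (1 + T) powr (real (mlen \<beta>) * (1 + \<delta>))"
        have q0: "0 \<le> q" unfolding q_def by simp
        have qle: "q \<le> (1 + T) powr (2 * real (mlen \<beta>) * (1 + \<delta>))"
          unfolding q_def using T0 prems(1) by (intro powr_mono) auto
        have e1: "\<epsilon> powr (3/4) * \<epsilon> powr (3/2) = \<epsilon> powr (9/4)"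
          using epos by (simp add: powr_add[symmetric])
        have e2: "\<epsilon> powr (9/4) \<le> \<epsilon> powr 2" using epos eps1 by (intro powr_mono') auto
        have e3: "\<epsilon> powr 2 = \<epsilon>^2" using epos by (simp add: powr_realpow)
        have "8 * Mc * q * \<epsilon> powr (3/2) = K0 * (\<epsilon> powr (3/4) * \<epsilon> powr (3/2)) * q"
          unfolding Mc_def K0_def by (simp add: algebra_simps)
        also have "\<dots> \<le> K0 * \<epsilon>^2 * (1 + T) powr (2 * real (mlen \<beta>) * (1 + \<delta>))"
          unfolding e1 e3[symmetric] K0_def using e2 qle q0
          by (intro mult_mono mult_left_mono) auto
        finally have r: "8 * Mc * q * \<epsilon> powr (3/2) \<le> K0 * \<epsilon>^2 * (1 + T) powr (2 * real (mlen \<beta>) * (1 + \<delta>))" .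
        have "ennreal (8 * Mc) * (ennreal q * E) = ennreal (8 * Mc * q * \<epsilon> powr (3/2))"
          unfolding E_def using Mc0 q0 by (simp add: ennreal_mult mult.assoc)
        also have "\<dots> \<le> ennreal (K0 * \<epsilon>^2 * (1 + T) powr (2 * real (mlen \<beta>) * (1 + \<delta>)))"
          by (rule ennreal_leI[OF r])
        finally show ?thesis unfolding q_def .
      qed
      finally show ?thesis unfolding I_def D_def .
    qed
    done
qed

end
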